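(* Let $S=\mathcal{M}^0(I,J,G,P)$ be a regular Rees matrix semigroup, let $\sigma=\sigma_1\oplus\cdots\oplus\sigma_r$ where $\sigma_1,\dots,\sigma_r$ is a complete set of pairwise inequivalent irreducible matrix representations of $G$, and let $(\pi^l,\pi^r)$ be the associated standard representations (a pair of matrix Schützenberger representations of $S$). (1) If $\pi^l$ and $\pi^r$ are both semiunitary, then $S$ is an inverse semigroup. (2) If $*$ is an involution on $S$ and $\pi^l,\pi^r$ are both semiunitary $*$-representations, then $S$ is an inverse semigroup and for every $s\in S$, $s^{*}$ is the inverse of $s$ (i.e. $ss^{*}s=s$ and $s^{*}ss^{*}=s^{*}$).
   Context: $G$ is a finite group, $G^0=G\cup\{0\}$, $I=\{1,\dots,m\}$, $J=\{1,\dots,n\}$, $P=(p_{ji})$ an $n\times m$ matrix over $G^0$. $\mathcal{M}^0(I,J,G,P)$ consists of elements $(a)_{ij}$ ($a\in G$, $i\in I$, $j\in J$) and a zero, with $(a)_{ij}\circ(b)_{kl}=(ap_{jk}b)_{il}$ if $p_{jk}\ne0$, else $0$; regular means every row and column of $P$ has a nonzero entry. For a matrix representation $\sigma:G\to GL_k(\mathbb{C})$ extended by $\sigma(0)=0$: $\pi^l((a)_{ij})$ is the $m\times m$ block matrix with $(i,l)$ block $\sigma(ap_{jl})$ ($l\in I$) and other blocks $0$; $\pi^r((a)_{ij})$ is the $n\times n$ block matrix with $(l,j)$ block $\sigma(p_{li}a)$ ($l\in J$) and other blocks $0$; both send $0\mapsto 0$. A matrix representation $\pi$ is semiunitary if $\pi(s)\pi(s)^{*}\pi(s)=\pi(s)$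 for all $s$, and a $*$-representation (for an involution $*$ on $S$, i.e. a bijection with $a^{**}=a$, $(ab)^{*}=b^{*}a^{*}$) if $\pi(s^{*})=\pi(s)^{*}$, where $^{*}$ on matrices is conjugate transpose. An inverse semigroup is one in which each $a$ has a unique $b$ with $aba=a$, $bab=b$. *)

theory Defs
  imports "HOL-Algebra.Group" "Jordan_Normal_Form.Matrix"
begin

definition adj_mat :: "complex mat \<Rightarrow> complex mat" where
  "adj_mat A = mat (dim_col A) (dim_row A) (\<lambda>(i,j). cnj (A $$ (j,i)))"

definition mat_rep :: "('g,'b) monoid_scheme \<Rightarrow> nat \<Rightarrow> ('g \<Rightarrow> complex mat) \<Rightarrow> bool" where
  "mat_rep G d \<sigma> \<longleftrightarrow>
     (\<forall>g\<in>carrier G. \<sigma> g \<in> carrier_mat d d) \<and>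
     \<sigma> \<one>\<^bsub>G\<^esub> = 1\<^sub>m d \<and>
     (\<forall>g\<in>carrier G. \<forall>h\<in>carrier G. \<sigma> (g \<otimes>\<^bsub>G\<^esub> h) = \<sigma> g * \<sigma> h)"

definition is_subspace :: "nat \<Rightarrow> complex vec set \<Rightarrow> bool" where
  "is_subspace d W \<longleftrightarrow> W \<subseteq> carrier_vec d \<and> 0\<^sub>v d \<in> W \<and>
     (\<forall>v\<in>W. \<forall>w\<in>W. v + w \<in> W) \<and> (\<forall>c. \<forall>v\<in>W. c \<cdot>\<^sub>v v \<in> W)"

definition irreducible_rep :: "('g,'b) monoid_scheme \<Rightarrow> nat \<Rightarrow> ('g \<Rightarrow> complex mat) \<Rightarrow> bool" where
  "irreducible_rep G d \<sigma> \<longleftrightarrow> mat_rep G d \<sigma> \<and> d > 0 \<and>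
     (\<forall>W. is_subspace d W \<and> (\<forall>g\<in>carrier G. \<forall>w\<in>W. \<sigma> g *\<^sub>v w \<in> W)
          \<longrightarrow> W = {0\<^sub>v d} \<or> W = carrier_vec d)"

definition equiv_rep :: "('g,'b) monoid_scheme \<Rightarrow> nat \<Rightarrow> ('g \<Rightarrow> complex mat) \<Rightarrow> nat \<Rightarrow> ('g \<Rightarrow> complex mat) \<Rightarrow> bool" where
  "equiv_rep G d \<sigma> e \<tau> \<longleftrightarrow> d = e \<and>
     (\<exists>T \<in> carrier_mat d d. invertible_mat T \<and> (\<forall>g\<in>carrier G. T * \<sigma> g = \<tau> g * T))"

definition complete_irreps :: "('g,'b) monoid_scheme \<Rightarrow> (nat \<times> ('g \<Rightarrow> complex mat)) list \<Rightarrow> bool" where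
  "complete_irreps G ss \<longleftrightarrow>
     (\<forall>x\<in>set ss. irreducible_rep G (fst x) (snd x)) \<and>
     (\<forall>i<length ss. \<forall>j<length ss. i \<noteq> j \<longrightarrow>
        \<not> equiv_rep G (fst (ss!i)) (snd (ss!i)) (fst (ss!j)) (snd (ss!j))) \<and>
     (\<forall>d \<tau>. irreducible_rep G d \<tau> \<longrightarrow> (\<exists>x\<in>set ss. equiv_rep G d \<tau> (fst x) (snd x)))"

fun dsum_dim :: "(nat \<times> ('g \<Rightarrow> complex mat)) list \<Rightarrow> nat" where
  "dsum_dim [] = 0"
| "dsum_dim (x # xs) = fst x + dsum_dim xs"

fun dsum_rep :: "(nat \<times> ('g \<Rightarrow> complex mat)) list \<Rightarrow> 'g \<Rightarrow> complex mat" where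
  "dsum_rep [] g = 1\<^sub>m 0"
| "dsum_rep (x # xs) g = four_block_mat (snd x g) (0\<^sub>m (fst x) (dsum_dim xs))
                                     (0\<^sub>m (dsum_dim xs) (fst x)) (dsum_rep xs g)"

(* ---------- Rees matrix semigroups M^0(I,J,G,P) ----------
   I = {0..<m}, J = {0..<n} (0-based indices); the element (a)_{ij} is Some (a,i,j),
   the zero is None.  P j i is the (j,i) entry of the n x m sandwich matrix,
   with None standing for 0. *)

type_synonym 'g rees = "('g \<times> nat \<times> nat) option"

definition rees_carrier :: "('g,'b) monoid_scheme \<Rightarrow> nat \<Rightarrow> nat \<Rightarrow> 'g rees set" where
  "rees_carrier G m n = insert None {Some (a,i,j) | a i j. a \<in> carrier G \<and> i < m \<and> j < n}"

fun rees_mult :: "('g,'b) monoid_scheme \<Rightarrow> (nat \<Rightarrow> nat \<Rightarrow> 'g option) \<Rightarrow> 'g rees \<Rightarrow> 'g rees \<Rightarrow> 'g rees" where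
  "rees_mult G P (Some (a,i,j)) (Some (b,k,l)) =
     (case P j k of None \<Rightarrow> None | Some p \<Rightarrow> Some (a \<otimes>\<^bsub>G\<^esub> p \<otimes>\<^bsub>G\<^esub> b, i, l))"
| "rees_mult G P _ _ = None"

definition sandwich_matrix :: "('g,'b) monoid_scheme \<Rightarrow> nat \<Rightarrow> nat \<Rightarrow> (nat \<Rightarrow> nat \<Rightarrow> 'g option) \<Rightarrow> bool" where
  "sandwich_matrix G m n P \<longleftrightarrow> (\<forall>j<n. \<forall>i<m. \<forall>p. P j i = Some p \<longrightarrow> p \<in> carrier G)"

definition regular_sandwich :: "nat \<Rightarrow> nat \<Rightarrow> (nat \<Rightarrow> nat \<Rightarrow> 'g option) \<Rightarrow> bool" where
  "regular_sandwich m n P \<longleftrightarrow> (\<forall>j<n. \<exists>i<m. P j i \<noteq> None) \<and> (\<forall>i<m. \<exists>j<n. P j i \<noteq> None)"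

definition inverse_semigroup :: "'s set \<Rightarrow> ('s \<Rightarrow> 's \<Rightarrow> 's) \<Rightarrow> bool" where
  "inverse_semigroup S f \<longleftrightarrow> (\<forall>a\<in>S. \<exists>!b. b \<in> S \<and> f (f a b) a = a \<and> f (f b a) b = b)"

definition involution_on :: "'s set \<Rightarrow> ('s \<Rightarrow> 's \<Rightarrow> 's) \<Rightarrow> ('s \<Rightarrow> 's) \<Rightarrow> bool" where
  "involution_on S f st \<longleftrightarrow> bij_betw st S S \<and> (\<forall>a\<in>S. st (st a) = a) \<and>
     (\<forall>a\<in>S. \<forall>b\<in>S. st (f a b) = f (st b) (st a))"

definition ext_rep :: "nat \<Rightarrow> ('g \<Rightarrow> complex mat) \<Rightarrow> 'g option \<Rightarrow> complex mat" where
  "ext_rep k \<sigma> x = (case x of None \<Rightarrow> 0\<^sub>m k k | Some g \<Rightarrow> \<sigma> g)"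

(* pi^l((a)_{ij}): m x m block matrix with (i,l)-block sigma(a p_{jl}), others 0 *)
definition pi_l :: "('g,'b) monoid_scheme \<Rightarrow> (nat \<Rightarrow> nat \<Rightarrow> 'g option) \<Rightarrow> nat \<Rightarrow> nat
                    \<Rightarrow> ('g \<Rightarrow> complex mat) \<Rightarrow> 'g rees \<Rightarrow> complex mat" where
  "pi_l G P m k \<sigma> s = (case s of
      None \<Rightarrow> 0\<^sub>m (m*k) (m*k)
    | Some (a,i,j) \<Rightarrow> mat (m*k) (m*k) (\<lambda>(r,c).
         if r div k = i then
           ext_rep k \<sigma> (map_option (\<lambda>p. a \<otimes>\<^bsub>G\<^esub> p) (P j (c div k))) $$ (r mod k, c mod k)
         else 0))"

(* pi^r((a)_{ij}): n x n block matrix with (l,j)-block sigma(p_{li} a), others 0 *)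
definition pi_r :: "('g,'b) monoid_scheme \<Rightarrow> (nat \<Rightarrow> nat \<Rightarrow> 'g option) \<Rightarrow> nat \<Rightarrow> nat
                    \<Rightarrow> ('g \<Rightarrow> complex mat) \<Rightarrow> 'g rees \<Rightarrow> complex mat" where
  "pi_r G P n k \<sigma> s = (case s of
      None \<Rightarrow> 0\<^sub>m (n*k) (n*k)
    | Some (a,i,j) \<Rightarrow> mat (n*k) (n*k) (\<lambda>(r,c).
         if c div k = j then
           ext_rep k \<sigma> (map_option (\<lambda>p. p \<otimes>\<^bsub>G\<^esub> a) (P (r div k) i)) $$ (r mod k, c mod k)
         else 0))"

definition semiunitary :: "'s set \<Rightarrow> ('s \<Rightarrow> complex mat) \<Rightarrow> bool" where
  "semiunitary S \<pi> \<longleftrightarrow> (\<forall>s\<in>S. \<pi> s * adj_mat (\<pi> s) * \<pi> s = \<pi> s)"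

definition star_rep :: "'s set \<Rightarrow> ('s \<Rightarrow> 's) \<Rightarrow> ('s \<Rightarrow> complex mat) \<Rightarrow> bool" where
  "star_rep S st \<pi> \<longleftrightarrow> (\<forall>s\<in>S. \<pi> (st s) = adj_mat (\<pi> s))"

end

theory Submission
  imports Defs "Jordan_Normal_Form.Gram_Schmidt"
begin


abbreviation adjm :: "complex mat \<Rightarrow> complex mat" where "adjm \<equiv> Defs.adj_mat"

lemma adj_mat_carrier[simp]: "A \<in> carrier_mat a b \<Longrightarrow> adjm A \<in> carrier_mat b a"
  unfolding Defs.adj_mat_def by auto
lemma adj_mat_dims[simp]: "dim_row (adjm A) = dim_col A" "dim_col (adjm A) = dim_row A"
  unfolding Defs.adj_mat_def by auto
lemma adj_mat_index[simp]: "i < dim_col A \<Longrightarrow> j < dim_row A \<Longrightarrow> adjm A $$ (i,j) = cnj (A $$ (j,i))"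
  unfolding Defs.adj_mat_def by auto
lemma adj_adj[simp]: "adjm (adjm A) = A"
  by (rule eq_matI, auto)
lemma adj_mult: assumes "A \<in> carrier_mat a b" "B \<in> carrier_mat b c"
  shows "adjm (A * B) = adjm B * adjm A"
proof (rule eq_matI)
  fix i j assume "i < dim_row (adjm B * adjm A)" "j < dim_col (adjm B * adjm A)"
  then show "adjm (A * B) $$ (i, j) = (adjm B * adjm A) $$ (i, j)"
    using assms by (auto simp: scalar_prod_def intro!: sum.cong)
qed (use assms in auto)
lemma adj_one[simp]: "adjm (1\<^sub>m n) = 1\<^sub>m n"
  by (rule eq_matI, auto)
lemma adj_zero[simp]: "adjm (0\<^sub>m a b) = 0\<^sub>m b a"
  by (rule eq_matI, auto)

lemma mat_eq_on_vec: fixes A B :: "complex mat"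
  assumes "A \<in> carrier_mat a b" "B \<in> carrier_mat a b"
  "\<And>x. x \<in> carrier_vec b \<Longrightarrow> A *\<^sub>v x = B *\<^sub>v x"
  shows "A = B"
proof (rule eq_matI)
  fix i j assume ij: "i < dim_row B" "j < dim_col B"
  have "(A *\<^sub>v unit_vec b j) $ i = (B *\<^sub>v unit_vec b j) $ i" using assms(3)[of "unit_vec b j"] by simp
  moreover have "(A *\<^sub>v unit_vec b j) $ i = A $$ (i,j)" using assms(1,2) ij
    by (simp add: row_def[symmetric])
  moreover have "(B *\<^sub>v unit_vec b j) $ i = B $$ (i,j)" using assms(1,2) ij
    by (simp add: row_def[symmetric])
  ultimately show "A $$ (i, j) = B $$ (i, j)" by metis
qed (use assms in auto)



lemma mult_cnj_real: "(z::complex) * cnj z = complex_of_real ((cmod z)^2)"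
  by (metis complex_norm_square)

lemma cinner_self_real: fixes v :: "complex vec"
  assumes "v \<in> carrier_vec d"
  shows "v \<bullet>c v = complex_of_real (\<Sum>t<d. (cmod (v$t))^2)"
  using assms unfolding scalar_prod_def of_real_sum
  by (auto simp: lessThan_atLeast0 mult_cnj_real intro!: sum.cong)

lemma subspace_basis_span:
  fixes W :: "complex vec set"
  assumes W: "is_subspace d W"
  shows "\<exists>us. set us \<subseteq> carrier_vec d \<and> corthogonal us \<and> length us \<le> d \<and>
     vec_space.col_space d (mat_of_cols d us) = W"
proof -
  interpret cof_vec_space d "TYPE(complex)" .
  from W have Wc: "W \<subseteq> carrier_vec d" unfolding is_subspace_def by auto
  have sub: "LinearCombinations.submodule class_ring W V"
    unfolding LinearCombinations.submodule_def using W vec_module unfolding is_subspace_def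
    by auto
  define P where "P A \<longleftrightarrow> A \<subseteq> W \<and> lin_indpt A" for A
  have bound: "finite A \<and> card A \<le> d" if "P A" for A
    using li_le_dim[OF fin_dim, of A] that Wc unfolding P_def dim_is_n by auto
  have "P {}" unfolding P_def lin_dep_def by auto
  from maximal_exists[of P d, OF bound this] obtain A where finA: "finite A" and maxA: "maximal A P"
    by blast
  from maxA have PA: "P A" unfolding maximal_def by auto
  have spanA: "span A = W"
  proof
    show "span A \<subseteq> W" using span_is_subset[OF _ sub] PA unfolding P_def by auto
    show "W \<subseteq> span A"
    proof
      fix w assume w: "w \<in> W"
      show "w \<in> span A"
      proof (cases "w \<in> A")
        case True then show ?thesis using in_own_span[of A] PA Wc unfolding P_def by auto
      next
        case False
        show ?thesis
        proof (rule ccontr)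
          assume ns: "w \<notin> span A"
          have "lin_indpt (A \<union> {w})"
            using lin_dep_iff_in_span[of A w] PA Wc w False ns unfolding P_def by auto
          then have "P (A \<union> {w})" using PA w unfolding P_def by auto
          then have "A \<union> {w} = A" using maxA unfolding maximal_def by auto
          then show False using False by auto
        qed
      qed
    qed
  qed
  obtain xs where xs: "set xs = A" "distinct xs" using finite_distinct_list[OF finA] by auto
  define us where "us = gram_schmidt d xs"
  have xsc: "set xs \<subseteq> carrier_vec d" using xs PA Wc unfolding P_def by auto
  have ind: "\<not> lin_dep (set xs)" using xs PA unfolding P_def by auto
  note gs = gram_schmidt_result[OF xsc xs(2) ind us_def]
  have len: "length us \<le> d" using gs(4) bound[OF PA] xs distinct_card[OF xs(2)] by auto
  have cs: "col_space (mat_of_cols d us) = W"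
    unfolding col_space_def using gs(1,3) xs spanA by simp
  show ?thesis using gs(2,3) len cs by blast
qed



definition diagm :: "nat \<Rightarrow> (nat \<Rightarrow> complex) \<Rightarrow> complex mat" where
  "diagm r f = mat r r (\<lambda>(i,j). if i = j then f i else 0)"

lemma diagm_carrier[simp]: "diagm r f \<in> carrier_mat r r" unfolding diagm_def by auto
lemma diagm_dims[simp]: "dim_row (diagm r f) = r" "dim_col (diagm r f) = r" unfolding diagm_def by auto

lemma diagm_mult_left: assumes "M \<in> carrier_mat r c" "i < r" "j < c"
  shows "(diagm r f * M) $$ (i,j) = f i * M $$ (i,j)"
proof -
  have "(diagm r f * M) $$ (i,j) = (\<Sum>t = 0..<r. diagm r f $$ (i,t) * M $$ (t,j))"
    using assms by (simp add: scalar_prod_def)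
  also have "\<dots> = (\<Sum>t = 0..<r. if t = i then f i * M $$ (i,j) else 0)"
    by (rule sum.cong) (use assms in \<open>auto simp: diagm_def\<close>)
  finally show ?thesis using assms by simp
qed

lemma diagm_mult_right: assumes "M \<in> carrier_mat c r" "i < c" "j < r"
  shows "(M * diagm r f) $$ (i,j) = M $$ (i,j) * f j"
proof -
  have "(M * diagm r f) $$ (i,j) = (\<Sum>t = 0..<r. M $$ (i,t) * diagm r f $$ (t,j))"
    using assms by (simp add: scalar_prod_def)
  also have "\<dots> = (\<Sum>t = 0..<r. if t = j then M $$ (i,j) * f j else 0)"
    by (rule sum.cong) (use assms in \<open>auto simp: diagm_def\<close>)
  finally show ?thesis using assms by simp
qed

lemma diagm_mult: "diagm r f * diagm r g = diagm r (\<lambda>i. f i * g i)"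
proof (rule eq_matI)
  fix i j assume "i < dim_row (diagm r (\<lambda>i. f i * g i))" "j < dim_col (diagm r (\<lambda>i. f i * g i))"
  then show "(diagm r f * diagm r g) $$ (i, j) = diagm r (\<lambda>i. f i * g i) $$ (i, j)"
    using diagm_mult_left[OF diagm_carrier, of i r j f g] by (auto simp: diagm_def)
qed auto

lemma diagm_one: "diagm r (\<lambda>i. 1) = 1\<^sub>m r"
  by (rule eq_matI, auto simp: diagm_def)

lemma adj_diagm: "adjm (diagm r f) = diagm r (\<lambda>i. cnj (f i))"
  by (rule eq_matI, auto simp: diagm_def)

lemma subspace_onb:
  fixes W :: "complex vec set"
  assumes W: "is_subspace d W"
  shows "\<exists>r B. B \<in> carrier_mat d r \<and> adjm B * B = 1\<^sub>m r \<and> r \<le> d \<and>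
     W = {B *\<^sub>v x | x. x \<in> carrier_vec r}"
proof -
  obtain us where us: "set us \<subseteq> carrier_vec d" "corthogonal us" "length us \<le> d"
     "vec_space.col_space d (mat_of_cols d us) = W"
    using subspace_basis_span[OF W] by blast
  define r where "r = length us"
  define B0 where "B0 = mat_of_cols d us"
  have B0c: "B0 \<in> carrier_mat d r" unfolding B0_def r_def by simp
  have rangeB0: "W = {B0 *\<^sub>v x | x. x \<in> carrier_vec r}"
    using us(4) vec_space.col_space_eq[OF B0c] B0c unfolding B0_def[symmetric] by auto
  define R where "R i = (\<Sum>t<d. (cmod (us!i $t))^2)" for i
  have nu: "us!i \<bullet>c us!i = complex_of_real (R i)" if "i < r" for i
  proof -
    have "us!i \<in> carrier_vec d" using us(1) that unfolding r_def by auto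
    then show ?thesis using cinner_self_real[of "us!i" d] unfolding R_def by auto
  qed
  have Rpos: "R i > 0" if "i < r" for i
  proof -
    have "us!i \<bullet>c us!i \<noteq> 0" using corthogonalD[OF us(2), of i i] that r_def by auto
    then have "R i \<noteq> 0" using nu[OF that] by auto
    moreover have "R i \<ge> 0" unfolding R_def by (auto intro: sum_nonneg)
    ultimately show ?thesis by auto
  qed
  have G: "adjm B0 * B0 = diagm r (\<lambda>i. complex_of_real (R i))"
  proof (rule eq_matI)
    fix i j assume ij: "i < dim_row (diagm r (\<lambda>i. complex_of_real (R i)))"
        "j < dim_col (diagm r (\<lambda>i. complex_of_real (R i)))"
    then have ij': "i < r" "j < r" by auto
    have "(adjm B0 * B0) $$ (i,j) = (\<Sum>t<d. us!j $ t * cnj (us!i $ t))"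
      using ij' B0c us(1) unfolding B0_def r_def
      by (auto simp: scalar_prod_def mat_of_cols_index lessThan_atLeast0 mult.commute intro!: sum.cong)
    also have "\<dots> = us!j \<bullet>c us!i"
    proof -
      have "us!i \<in> carrier_vec d" using us(1) ij' unfolding r_def by auto
      then show ?thesis by (auto simp: scalar_prod_def lessThan_atLeast0)
    qed
    also have "\<dots> = diagm r (\<lambda>i. complex_of_real (R i)) $$ (i,j)"
      using corthogonalD[OF us(2), of j i] ij' nu[of i] unfolding r_def diagm_def by auto
    finally show "(adjm B0 * B0) $$ (i,j) = diagm r (\<lambda>i. complex_of_real (R i)) $$ (i,j)" .
  qed (use B0c in auto)
  have Rne: "R i \<noteq> 0" "sqrt (R i) \<noteq> 0" "\<bar>R i\<bar> = R i" if "i < r" for i using Rpos[OF that] by auto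
  define D where "D = diagm r (\<lambda>i. complex_of_real (1 / sqrt (R i)))"
  define D' where "D' = diagm r (\<lambda>i. complex_of_real (sqrt (R i)))"
  have DD': "D * D' = 1\<^sub>m r" unfolding D_def D'_def diagm_mult diagm_one[symmetric]
    by (rule eq_matI, auto simp: diagm_def Rpos Rne simp flip: of_real_mult)
  define B where "B = B0 * D"
  have Bc: "B \<in> carrier_mat d r" unfolding B_def D_def using B0c by auto
  have adjD: "adjm D = D" unfolding D_def adj_diagm by simp
  have Dc: "D \<in> carrier_mat r r" unfolding D_def by simp
  have aB0: "adjm B0 \<in> carrier_mat r d" using B0c by simp
  have "adjm B * B = D * adjm B0 * (B0 * D)"
    unfolding B_def using adj_mult[OF B0c Dc] adjD by simp
  also have "\<dots> = D * (adjm B0 * (B0 * D))" using assoc_mult_mat[OF Dc aB0, of "B0 * D" r] B0c Dc by simp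
  also have "\<dots> = D * ((adjm B0 * B0) * D)" using assoc_mult_mat[OF aB0 B0c Dc] by simp
  also have "\<dots> = D * (adjm B0 * B0) * D" using assoc_mult_mat[OF Dc _ Dc, of "adjm B0 * B0"] aB0 B0c by simp
  finally have "adjm B * B = D * (adjm B0 * B0) * D" .
  also have "\<dots> = 1\<^sub>m r" unfolding G D_def diagm_mult diagm_one[symmetric]
    by (rule eq_matI, auto simp: diagm_def Rpos Rne simp flip: of_real_mult)
  finally have ON: "adjm B * B = 1\<^sub>m r" .
  have "W = {B *\<^sub>v x | x. x \<in> carrier_vec r}"
  proof -
    have D'c: "D' \<in> carrier_mat r r" unfolding D'_def by simp
    have f1: "B0 *\<^sub>v x = B *\<^sub>v (D' *\<^sub>v x) \<and> D' *\<^sub>v x \<in> carrier_vec r" if x: "x \<in> carrier_vec r" for x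
    proof -
      have "B *\<^sub>v (D' *\<^sub>v x) = B0 *\<^sub>v (D *\<^sub>v (D' *\<^sub>v x))"
        unfolding B_def using assoc_mult_mat_vec[OF B0c Dc mult_mat_vec_carrier[OF D'c x]] .
      also have "D *\<^sub>v (D' *\<^sub>v x) = (D * D') *\<^sub>v x"
        using assoc_mult_mat_vec[OF Dc D'c x] by simp
      also have "\<dots> = x" using DD' x by simp
      finally show ?thesis using mult_mat_vec_carrier[OF D'c x] by simp
    qed
    have f2: "B *\<^sub>v x = B0 *\<^sub>v (D *\<^sub>v x) \<and> D *\<^sub>v x \<in> carrier_vec r" if x: "x \<in> carrier_vec r" for x
      unfolding B_def using assoc_mult_mat_vec[OF B0c Dc x] mult_mat_vec_carrier[OF Dc x] by simp
    show ?thesis unfolding rangeB0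
    proof (intro equalityI subsetI)
      fix y assume "y \<in> {B0 *\<^sub>v x |x. x \<in> carrier_vec r}"
      then obtain x where x: "x \<in> carrier_vec r" "y = B0 *\<^sub>v x" by blast
      show "y \<in> {B *\<^sub>v x |x. x \<in> carrier_vec r}" using f1[OF x(1)] x(2) by blast
    next
      fix y assume "y \<in> {B *\<^sub>v x |x. x \<in> carrier_vec r}"
      then obtain x where x: "x \<in> carrier_vec r" "y = B *\<^sub>v x" by blast
      show "y \<in> {B0 *\<^sub>v x |x. x \<in> carrier_vec r}" using f2[OF x(1)] x(2) by blast
    qed
  qed
  then show ?thesis using Bc ON us(3) r_def by blast
qed



definition urep :: "('g,'b) monoid_scheme \<Rightarrow> nat \<Rightarrow> ('g \<Rightarrow> complex mat) \<Rightarrow> bool" where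
  "urep G d \<rho> \<longleftrightarrow> mat_rep G d \<rho> \<and> (\<forall>h\<in>carrier G. adjm (\<rho> h) = \<rho> (inv\<^bsub>G\<^esub> h))"

lemma mat_vec_zero[simp]: "(A :: complex mat) \<in> carrier_mat a b \<Longrightarrow> A *\<^sub>v 0\<^sub>v b = 0\<^sub>v a"
  by (rule eq_vecI, auto simp: scalar_prod_def)

lemma mat_vec_empty: "(A :: complex mat) \<in> carrier_mat a 0 \<Longrightarrow> x \<in> carrier_vec 0 \<Longrightarrow> A *\<^sub>v x = 0\<^sub>v a"
  by (rule eq_vecI, auto simp: scalar_prod_def)

lemma sandw_carrier[simp]: "B \<in> carrier_mat d r \<Longrightarrow> M \<in> carrier_mat d d \<Longrightarrow> adjm B * M * B \<in> carrier_mat r r"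
  using mult_carrier_mat[OF mult_carrier_mat[OF adj_mat_carrier] ] by blast

lemma sandw_carrier2[simp]: "B \<in> carrier_mat d r \<Longrightarrow> M \<in> carrier_mat d d \<Longrightarrow> B * (adjm B * M * B) \<in> carrier_mat d r"
  using mult_carrier_mat sandw_carrier by blast

lemma ON_left: assumes "B \<in> carrier_mat d r" "adjm B * B = 1\<^sub>m r" "x \<in> carrier_vec r"
  shows "adjm B *\<^sub>v (B *\<^sub>v x) = x"
proof -
  have "adjm B *\<^sub>v (B *\<^sub>v x) = (adjm B * B) *\<^sub>v x"
    using assoc_mult_mat_vec[of "adjm B" r d B r x] assms by simp
  then show ?thesis using assms by simp
qed

lemma restrict_rep:
  fixes B :: "complex mat" and \<rho> :: "'g \<Rightarrow> complex mat"
  assumes G: "group G" and U: "urep G d \<rho>" and Bc: "B \<in> carrier_mat d r" and ON: "adjm B * B = 1\<^sub>m r"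
    and inv: "\<And>h x. h \<in> carrier G \<Longrightarrow> x \<in> carrier_vec r \<Longrightarrow> \<exists>y\<in>carrier_vec r. \<rho> h *\<^sub>v (B *\<^sub>v x) = B *\<^sub>v y"
  shows "\<And>h. h \<in> carrier G \<Longrightarrow> \<rho> h * B = B * (adjm B * \<rho> h * B)"
    and "urep G r (\<lambda>h. adjm B * \<rho> h * B)"
proof -
  have rc: "\<rho> h \<in> carrier_mat d d" if "h \<in> carrier G" for h
    using U that unfolding urep_def mat_rep_def by auto
  have aB: "adjm B \<in> carrier_mat r d" using Bc by simp
  show eq: "\<rho> h * B = B * (adjm B * \<rho> h * B)" if h: "h \<in> carrier G" for h
  proof (rule mat_eq_on_vec[of _ d r])
    show "\<rho> h * B \<in> carrier_mat d r" using rc[OF h] Bc by simp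
    show "B * (adjm B * \<rho> h * B) \<in> carrier_mat d r" using rc[OF h] Bc by simp
    fix x :: "complex vec" assume x: "x \<in> carrier_vec r"
    obtain y where y: "y \<in> carrier_vec r" "\<rho> h *\<^sub>v (B *\<^sub>v x) = B *\<^sub>v y" using inv[OF h x] by auto
    have "(B * (adjm B * \<rho> h * B)) *\<^sub>v x = B *\<^sub>v (adjm B *\<^sub>v (\<rho> h *\<^sub>v (B *\<^sub>v x)))"
    proof -
      have M: "adjm B * \<rho> h * B \<in> carrier_mat r r" using rc[OF h] Bc by simp
      have M1: "adjm B * \<rho> h \<in> carrier_mat r d" using rc[OF h] aB by simp
      have "(B * (adjm B * \<rho> h * B)) *\<^sub>v x = B *\<^sub>v ((adjm B * \<rho> h * B) *\<^sub>v x)"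
        using assoc_mult_mat_vec[OF Bc M x] .
      also have "(adjm B * \<rho> h * B) *\<^sub>v x = (adjm B * \<rho> h) *\<^sub>v (B *\<^sub>v x)"
        using assoc_mult_mat_vec[OF M1 Bc x] .
      also have "\<dots> = adjm B *\<^sub>v (\<rho> h *\<^sub>v (B *\<^sub>v x))"
        using assoc_mult_mat_vec[OF aB rc[OF h], of "B *\<^sub>v x"] Bc x by simp
      finally show ?thesis .
    qed
    also have "\<dots> = B *\<^sub>v y" using y ON_left[OF Bc ON] by simp
    also have "\<dots> = (\<rho> h * B) *\<^sub>v x" using y rc[OF h] Bc x by simp
    finally show "(\<rho> h * B) *\<^sub>v x = (B * (adjm B * \<rho> h * B)) *\<^sub>v x" by simp
  qed
  show "urep G r (\<lambda>h. adjm B * \<rho> h * B)"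
    unfolding urep_def mat_rep_def
  proof (intro conjI ballI)
    fix h assume h: "h \<in> carrier G"
    show "adjm B * \<rho> h * B \<in> carrier_mat r r" using rc[OF h] Bc by simp
  next
    have "\<rho> \<one>\<^bsub>G\<^esub> = 1\<^sub>m d" using U unfolding urep_def mat_rep_def by auto
    then show "adjm B * \<rho> \<one>\<^bsub>G\<^esub> * B = 1\<^sub>m r" using ON aB right_mult_one_mat[OF aB] by simp
  next
    fix g h assume g: "g \<in> carrier G" and h: "h \<in> carrier G"
    have rgh: "\<rho> (g \<otimes>\<^bsub>G\<^esub> h) = \<rho> g * \<rho> h" using U g h unfolding urep_def mat_rep_def by auto
    have c1: "adjm B * \<rho> g \<in> carrier_mat r d" using aB rc[OF g] by simp
    have c2: "B * (adjm B * \<rho> h * B) \<in> carrier_mat d r" using Bc rc[OF h] by simp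
    have c3: "adjm B * \<rho> h * B \<in> carrier_mat r r" using Bc rc[OF h] by simp
    have "adjm B * \<rho> (g \<otimes>\<^bsub>G\<^esub> h) * B = adjm B * (\<rho> g * \<rho> h) * B" using rgh by simp
    also have "adjm B * (\<rho> g * \<rho> h) = adjm B * \<rho> g * \<rho> h"
      using assoc_mult_mat[OF aB rc[OF g] rc[OF h]] by simp
    also have "adjm B * \<rho> g * \<rho> h * B = adjm B * \<rho> g * (\<rho> h * B)"
      using assoc_mult_mat[OF c1 rc[OF h] Bc] by simp
    also have "\<dots> = adjm B * \<rho> g * (B * (adjm B * \<rho> h * B))" using eq[OF h] by simp
    also have "\<dots> = adjm B * \<rho> g * B * (adjm B * \<rho> h * B)"
      using assoc_mult_mat[OF c1 Bc c3] by simp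
    finally show "adjm B * \<rho> (g \<otimes>\<^bsub>G\<^esub> h) * B = adjm B * \<rho> g * B * (adjm B * \<rho> h * B)" .
  next
    fix h assume h: "h \<in> carrier G"
    have c1: "adjm B * \<rho> h \<in> carrier_mat r d" using aB rc[OF h] by simp
    have "adjm (adjm B * \<rho> h * B) = adjm B * adjm (adjm B * \<rho> h)"
      using adj_mult[OF c1 Bc] by simp
    also have "adjm (adjm B * \<rho> h) = adjm (\<rho> h) * B"
      using adj_mult[OF aB rc[OF h]] by simp
    also have "adjm (\<rho> h) = \<rho> (inv\<^bsub>G\<^esub> h)" using U h unfolding urep_def by auto
    also have "adjm B * (\<rho> (inv\<^bsub>G\<^esub> h) * B) = adjm B * \<rho> (inv\<^bsub>G\<^esub> h) * B"
      using assoc_mult_mat[OF aB rc[of "inv\<^bsub>G\<^esub> h"] Bc] G h by simp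
    finally show "adjm (adjm B * \<rho> h * B) = adjm B * \<rho> (inv\<^bsub>G\<^esub> h) * B" .
  qed
qed



lemma exists_irrep_nontriv:
  fixes \<rho> :: "'g \<Rightarrow> complex mat" and G :: "('g,'b) monoid_scheme"
  assumes G: "group G" and g: "g \<in> carrier G"
  shows "urep G d \<rho> \<Longrightarrow> d > 0 \<Longrightarrow> \<rho> g \<noteq> 1\<^sub>m d \<Longrightarrow> \<exists>e \<tau>. irreducible_rep G e \<tau> \<and> \<tau> g \<noteq> 1\<^sub>m e"
proof (induction d arbitrary: \<rho> rule: less_induct)
  case (less d \<rho>)
  show ?case
  proof (cases "irreducible_rep G d \<rho>")
    case True then show ?thesis using less.prems by blast
  next
    case False
    then obtain W where W: "is_subspace d W" and Winv: "\<forall>h\<in>carrier G. \<forall>w\<in>W. \<rho> h *\<^sub>v w \<in> W"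
      and W0: "W \<noteq> {0\<^sub>v d}" and W1: "W \<noteq> carrier_vec d"
      using less.prems unfolding irreducible_rep_def urep_def by blast
    have rc: "\<rho> h \<in> carrier_mat d d" if "h \<in> carrier G" for h
      using less.prems that unfolding urep_def mat_rep_def by auto
    have Wc: "W \<subseteq> carrier_vec d" and W0in: "0\<^sub>v d \<in> W" using W unfolding is_subspace_def by auto
    obtain r B where Bc: "B \<in> carrier_mat d r" and ON: "adjm B * B = 1\<^sub>m r" and rd: "r \<le> d"
      and WB: "W = {B *\<^sub>v x | x. x \<in> carrier_vec r}"
      using subspace_onb[OF W] by blast
    have aB: "adjm B \<in> carrier_mat r d" using Bc by simp
    define W2 where "W2 = {v \<in> carrier_vec d. adjm B *\<^sub>v v = 0\<^sub>v r}"
    have W2s: "is_subspace d W2" unfolding is_subspace_def W2_def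
      using aB by (auto simp: mult_add_distrib_mat_vec[OF aB] mult_mat_vec[OF aB])
    obtain s B2 where B2c: "B2 \<in> carrier_mat d s" and ON2: "adjm B2 * B2 = 1\<^sub>m s" and sd: "s \<le> d"
      and WB2: "W2 = {B2 *\<^sub>v x | x. x \<in> carrier_vec s}"
      using subspace_onb[OF W2s] by blast
    have proj: "v - B *\<^sub>v (adjm B *\<^sub>v v) \<in> W2" if v: "v \<in> carrier_vec d" for v
    proof -
      have "adjm B *\<^sub>v (v - B *\<^sub>v (adjm B *\<^sub>v v)) = adjm B *\<^sub>v v - adjm B *\<^sub>v (B *\<^sub>v (adjm B *\<^sub>v v))"
        using mult_minus_distrib_mat_vec[OF aB v, of "B *\<^sub>v (adjm B *\<^sub>v v)"] Bc aB v by simp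
      also have "\<dots> = 0\<^sub>v r" using ON_left[OF Bc ON, of "adjm B *\<^sub>v v"] aB v by simp
      moreover have "v - B *\<^sub>v (adjm B *\<^sub>v v) \<in> carrier_vec d"
        using minus_carrier_vec[OF v mult_mat_vec_carrier[OF Bc]] aB v by simp
      ultimately show ?thesis unfolding W2_def by simp
    qed
    have invB: "\<exists>y\<in>carrier_vec r. \<rho> h *\<^sub>v (B *\<^sub>v x) = B *\<^sub>v y"
      if "h \<in> carrier G" "x \<in> carrier_vec r" for h x
    proof -
      have "B *\<^sub>v x \<in> W" unfolding WB using that by blast
      then have "\<rho> h *\<^sub>v (B *\<^sub>v x) \<in> W" using Winv that by blast
      then show ?thesis unfolding WB by blast
    qed
    have R1a: "\<rho> h * B = B * (adjm B * \<rho> h * B)" if "h \<in> carrier G" for h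
      by (rule restrict_rep(1)[OF G less.prems(1) Bc ON _ that]) (rule invB)
    have R1b: "urep G r (\<lambda>h. adjm B * \<rho> h * B)"
      by (rule restrict_rep(2)[OF G less.prems(1) Bc ON]) (rule invB)
    note R1 = R1a R1b
    have invB2: "\<exists>y\<in>carrier_vec s. \<rho> h *\<^sub>v (B2 *\<^sub>v x) = B2 *\<^sub>v y"
      if h: "h \<in> carrier G" and x: "x \<in> carrier_vec s" for h x
    proof -
      have v: "B2 *\<^sub>v x \<in> W2" unfolding WB2 using x by blast
      then have vc: "B2 *\<^sub>v x \<in> carrier_vec d" and v0: "adjm B *\<^sub>v (B2 *\<^sub>v x) = 0\<^sub>v r"
        unfolding W2_def by auto
      have ih: "inv\<^bsub>G\<^esub> h \<in> carrier G" using G h by simp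
      define M where "M = adjm B * \<rho> (inv\<^bsub>G\<^esub> h) * B"
      have Mc: "M \<in> carrier_mat r r" unfolding M_def using Bc rc[OF ih] by simp
      have "adjm B * \<rho> h = adjm (adjm (\<rho> h) * B)"
        using adj_mult[of "adjm (\<rho> h)" d d B r] rc[OF h] Bc by simp
      also have "adjm (\<rho> h) = \<rho> (inv\<^bsub>G\<^esub> h)" using less.prems(1) h unfolding urep_def by auto
      also have "\<rho> (inv\<^bsub>G\<^esub> h) * B = B * M" unfolding M_def using R1(1)[OF ih] .
      also have "adjm (B * M) = adjm M * adjm B" using adj_mult[OF Bc Mc] .
      finally have eq: "adjm B * \<rho> h = adjm M * adjm B" .
      have "adjm B *\<^sub>v (\<rho> h *\<^sub>v (B2 *\<^sub>v x)) = (adjm B * \<rho> h) *\<^sub>v (B2 *\<^sub>v x)"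
        using assoc_mult_mat_vec[OF aB rc[OF h] vc] by simp
      also have "\<dots> = adjm M *\<^sub>v (adjm B *\<^sub>v (B2 *\<^sub>v x))"
        unfolding eq using assoc_mult_mat_vec[of "adjm M" r r "adjm B" d] Mc aB vc by simp
      also have "\<dots> = 0\<^sub>v r" unfolding v0 using Mc by simp
      finally have "\<rho> h *\<^sub>v (B2 *\<^sub>v x) \<in> W2" unfolding W2_def using rc[OF h] vc by auto
      then show ?thesis unfolding WB2 by blast
    qed
    have R2a: "\<rho> h * B2 = B2 * (adjm B2 * \<rho> h * B2)" if "h \<in> carrier G" for h
      by (rule restrict_rep(1)[OF G less.prems(1) B2c ON2 _ that]) (rule invB2)
    have R2b: "urep G s (\<lambda>h. adjm B2 * \<rho> h * B2)"
      by (rule restrict_rep(2)[OF G less.prems(1) B2c ON2]) (rule invB2)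
    note R2 = R2a R2b
    have range_zero: "{C *\<^sub>v x | x. x \<in> carrier_vec 0} = {0\<^sub>v d}" if "C \<in> carrier_mat d 0" for C :: "complex mat"
      using mat_vec_empty[OF that] by (auto intro!: exI[of _ "0\<^sub>v 0"])
    have range_full: "{C *\<^sub>v x | x. x \<in> carrier_vec d} = carrier_vec d"
      if C: "C \<in> carrier_mat d d" and CO: "adjm C * C = 1\<^sub>m d" for C :: "complex mat"
    proof -
      have "C * adjm C = 1\<^sub>m d" using mat_mult_left_right_inverse[OF _ C CO] C by simp
      then have "C *\<^sub>v (adjm C *\<^sub>v v) = v" if "v \<in> carrier_vec d" for v
        using assoc_mult_mat_vec[of C d d "adjm C" d v] C that by simp
      then have "v \<in> {C *\<^sub>v x | x. x \<in> carrier_vec d}" if "v \<in> carrier_vec d" for v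
      proof -
        have "v = C *\<^sub>v (adjm C *\<^sub>v v)" "adjm C *\<^sub>v v \<in> carrier_vec d"
          using \<open>\<And>v. v \<in> carrier_vec d \<Longrightarrow> C *\<^sub>v (adjm C *\<^sub>v v) = v\<close>[OF that]
            mult_mat_vec_carrier[OF adj_mat_carrier[OF C] that] by auto
        then show ?thesis by blast
      qed
      moreover have "{C *\<^sub>v x | x. x \<in> carrier_vec d} \<subseteq> carrier_vec d" using C by auto
      ultimately show ?thesis by blast
    qed
    have r0: "r > 0" using W0 WB range_zero[of B] Bc by (cases r) auto
    have rlt: "r < d"
    proof (rule ccontr)
      assume "\<not> r < d" then have "r = d" using rd by simp
      then show False using W1 WB range_full[of B] Bc ON by simp
    qed
    obtain v where v: "v \<in> carrier_vec d" "v \<notin> W" using W1 Wc by blast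
    have "B *\<^sub>v (adjm B *\<^sub>v v) \<in> W" unfolding WB using aB v by auto
    then have "v - B *\<^sub>v (adjm B *\<^sub>v v) \<noteq> 0\<^sub>v d"
    proof -
      assume u: "B *\<^sub>v (adjm B *\<^sub>v v) \<in> W"
      have uc: "B *\<^sub>v (adjm B *\<^sub>v v) \<in> carrier_vec d" using mult_mat_vec_carrier[OF Bc mult_mat_vec_carrier[OF aB v(1)]] .
      show ?thesis
      proof
        assume z: "v - B *\<^sub>v (adjm B *\<^sub>v v) = 0\<^sub>v d"
        have "v = B *\<^sub>v (adjm B *\<^sub>v v)"
        proof (rule eq_vecI)
          fix i assume i: "i < dim_vec (B *\<^sub>v (adjm B *\<^sub>v v))"
          then have "(v - B *\<^sub>v (adjm B *\<^sub>v v)) $ i = 0" using z uc Bc by simp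
          then show "v $ i = (B *\<^sub>v (adjm B *\<^sub>v v)) $ i" using i v uc by simp
        qed (use v uc Bc in simp)
        then show False using u v by simp
      qed
    qed
    then have W2n0: "W2 \<noteq> {0\<^sub>v d}" using proj[OF v(1)] by auto
    have s0: "s > 0" using W2n0 WB2 range_zero[of B2] B2c by (cases s) auto
    have slt: "s < d"
    proof (rule ccontr)
      assume "\<not> s < d" then have "s = d" using sd by simp
      then have W2all: "W2 = carrier_vec d" using WB2 range_full[of B2] B2c ON2 by simp
      obtain w where w: "w \<in> W" "w \<noteq> 0\<^sub>v d" using W0 W0in by blast
      obtain x where x: "x \<in> carrier_vec r" "w = B *\<^sub>v x" using w WB by blast
      have "adjm B *\<^sub>v w = 0\<^sub>v r" using W2all w Wc unfolding W2_def by auto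
      then have "x = 0\<^sub>v r" using ON_left[OF Bc ON x(1)] x by simp
      then show False using w x Bc by simp
    qed
    show ?thesis
    proof (cases "adjm B * \<rho> g * B = 1\<^sub>m r \<and> adjm B2 * \<rho> g * B2 = 1\<^sub>m s")
      case True
      have e1: "\<rho> g * B = B" using R1(1)[OF g] True Bc by simp
      have e2: "\<rho> g * B2 = B2" using R2(1)[OF g] True B2c by simp
      have "\<rho> g = 1\<^sub>m d"
      proof (rule mat_eq_on_vec[of _ d d])
        show "\<rho> g \<in> carrier_mat d d" using rc[OF g] .
        show "1\<^sub>m d \<in> carrier_mat d d" by simp
        fix x :: "complex vec" assume x: "x \<in> carrier_vec d"
        obtain y where y: "y \<in> carrier_vec s" "x - B *\<^sub>v (adjm B *\<^sub>v x) = B2 *\<^sub>v y"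
          using proj[OF x] unfolding WB2 by blast
        define a where "a = adjm B *\<^sub>v x"
        have ac: "a \<in> carrier_vec r" unfolding a_def using aB x by simp
        have xs: "x = B *\<^sub>v a + B2 *\<^sub>v y"
        proof (rule eq_vecI)
          fix i assume i: "i < dim_vec (B *\<^sub>v a + B2 *\<^sub>v y)"
          then have id: "i < d" using B2c by simp
          have "(x - B *\<^sub>v a) $ i = (B2 *\<^sub>v y) $ i" using y(2) unfolding a_def by simp
          then show "x $ i = (B *\<^sub>v a + B2 *\<^sub>v y) $ i" using id x Bc B2c by (simp add: diff_eq_eq)
        qed (use x B2c in simp)
        have "\<rho> g *\<^sub>v x = \<rho> g *\<^sub>v (B *\<^sub>v a) + \<rho> g *\<^sub>v (B2 *\<^sub>v y)"
          unfolding xs using mult_add_distrib_mat_vec[OF rc[OF g]] Bc B2c ac y(1) by simp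
        also have "\<dots> = B *\<^sub>v a + B2 *\<^sub>v y"
          using assoc_mult_mat_vec[OF rc[OF g] Bc ac, symmetric] assoc_mult_mat_vec[OF rc[OF g] B2c y(1), symmetric]
          e1 e2 by simp
        finally show "\<rho> g *\<^sub>v x = 1\<^sub>m d *\<^sub>v x" using xs x by simp
      qed
      then show ?thesis using less.prems by simp
    next
      case False
      then have "adjm B * \<rho> g * B \<noteq> 1\<^sub>m r \<or> adjm B2 * \<rho> g * B2 \<noteq> 1\<^sub>m s" by blast
      then show ?thesis
      proof
        assume ne: "adjm B * \<rho> g * B \<noteq> 1\<^sub>m r"
        show ?thesis by (rule less.IH[OF rlt R1(2) r0 ne])
      next
        assume ne: "adjm B2 * \<rho> g * B2 \<noteq> 1\<^sub>m s"
        show ?thesis by (rule less.IH[OF slt R2(2) s0 ne])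
      qed
    qed
  qed
qed



lemma regular_urep:
  fixes G :: "('g,'b) monoid_scheme"
  assumes G: "group G" and fin: "finite (carrier G)" and g: "g \<in> carrier G" and g1: "g \<noteq> \<one>\<^bsub>G\<^esub>"
  shows "\<exists>d \<rho>. urep G d \<rho> \<and> d > 0 \<and> \<rho> g \<noteq> 1\<^sub>m d"
proof -
  interpret group G by fact
  obtain xs where xs: "set xs = carrier G" "distinct xs" using finite_distinct_list[OF fin] by blast
  define N where "N = length xs"
  define \<rho> :: "'g \<Rightarrow> complex mat" where
    "\<rho> h = mat N N (\<lambda>(r,c). if xs!r = h \<otimes>\<^bsub>G\<^esub> xs!c then 1 else 0)" for h
  have xin: "xs!i \<in> carrier G" if "i < N" for i
  proof -
    have "xs!i \<in> set xs" using that unfolding N_def by (rule nth_mem)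
    then show ?thesis using xs(1) by blast
  qed
  have idx: "\<exists>t<N. xs!t = y" if "y \<in> carrier G" for y
    using that xs unfolding N_def by (metis in_set_conv_nth)
  have inj: "xs!t = xs!t' \<longleftrightarrow> t = t'" if "t < N" "t' < N" for t t'
    using xs(2) that unfolding N_def by (simp add: nth_eq_iff_index_eq)
  have one: "\<rho> \<one>\<^bsub>G\<^esub> = 1\<^sub>m N"
    by (rule eq_matI) (auto simp: \<rho>_def xin inj)
  have mult: "\<rho> (a \<otimes>\<^bsub>G\<^esub> b) = \<rho> a * \<rho> b" if a: "a \<in> carrier G" and b: "b \<in> carrier G" for a b
  proof (rule eq_matI)
    fix r c assume rc: "r < dim_row (\<rho> a * \<rho> b)" "c < dim_col (\<rho> a * \<rho> b)"
    then have r: "r < N" and c: "c < N" by (auto simp: \<rho>_def)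
    obtain t0 where t0: "t0 < N" "xs!t0 = b \<otimes>\<^bsub>G\<^esub> xs!c" using idx[of "b \<otimes>\<^bsub>G\<^esub> xs!c"] b xin[OF c] by auto
    have "(\<rho> a * \<rho> b) $$ (r,c) = (\<Sum>t = 0..<N. \<rho> a $$ (r,t) * \<rho> b $$ (t,c))"
      using r c by (simp add: \<rho>_def scalar_prod_def)
    also have "\<dots> = (\<Sum>t = 0..<N. if t = t0 then (if xs!r = a \<otimes>\<^bsub>G\<^esub> xs!t0 then 1 else 0) else 0)"
    proof (rule sum.cong)
      fix t assume t: "t \<in> {0..<N}"
      have "xs!t = b \<otimes>\<^bsub>G\<^esub> xs!c \<longleftrightarrow> t = t0" using t0 inj[of t t0] t by auto
      then show "\<rho> a $$ (r,t) * \<rho> b $$ (t,c) = (if t = t0 then (if xs!r = a \<otimes>\<^bsub>G\<^esub> xs!t0 then 1 else 0) else 0)"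
        using t r c by (auto simp: \<rho>_def)
    qed simp
    also have "\<dots> = (if xs!r = a \<otimes>\<^bsub>G\<^esub> xs!t0 then 1 else 0)" using t0 by simp
    also have "\<dots> = \<rho> (a \<otimes>\<^bsub>G\<^esub> b) $$ (r,c)"
      using r c t0 a b xin[OF c] by (simp add: \<rho>_def m_assoc)
    finally show "\<rho> (a \<otimes>\<^bsub>G\<^esub> b) $$ (r, c) = (\<rho> a * \<rho> b) $$ (r, c)" by simp
  qed (auto simp: \<rho>_def)
  have adj: "adjm (\<rho> h) = \<rho> (inv\<^bsub>G\<^esub> h)" if h: "h \<in> carrier G" for h
  proof (rule eq_matI)
    fix r c assume "r < dim_row (\<rho> (inv\<^bsub>G\<^esub> h))" "c < dim_col (\<rho> (inv\<^bsub>G\<^esub> h))"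
    then have r: "r < N" and c: "c < N" by (auto simp: \<rho>_def)
    have "xs!c = h \<otimes>\<^bsub>G\<^esub> xs!r \<longleftrightarrow> xs!r = inv\<^bsub>G\<^esub> h \<otimes>\<^bsub>G\<^esub> xs!c"
      using h xin[OF r] xin[OF c]
      by (metis inv_closed inv_solve_left)
    then show "adjm (\<rho> h) $$ (r,c) = \<rho> (inv\<^bsub>G\<^esub> h) $$ (r,c)" using r c by (auto simp: \<rho>_def)
  qed (auto simp: \<rho>_def)
  have U: "urep G N \<rho>" unfolding urep_def mat_rep_def
    using one mult adj by (auto simp: \<rho>_def)
  have N0: "N > 0"
  proof (rule ccontr)
    assume "\<not> N > 0" then have "xs = []" unfolding N_def by simp
    then have "carrier G = {}" using xs(1) by simp
    then show False using one_closed by blast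
  qed
  have "\<rho> g $$ (0,0) = 0"
  proof -
    have "xs!0 \<noteq> g \<otimes>\<^bsub>G\<^esub> xs!0"
    proof
      assume "xs!0 = g \<otimes>\<^bsub>G\<^esub> xs!0"
      then have "\<one>\<^bsub>G\<^esub> \<otimes>\<^bsub>G\<^esub> xs!0 = g \<otimes>\<^bsub>G\<^esub> xs!0" using xin[OF N0] by simp
      then show False using right_cancel[of "xs!0" "\<one>\<^bsub>G\<^esub>" g] g g1 xin[OF N0] by simp
    qed
    then show ?thesis using N0 by (simp add: \<rho>_def)
  qed
  then have "\<rho> g \<noteq> 1\<^sub>m N" using N0 by auto
  then show ?thesis using U N0 by blast
qed

lemma dsum_carrier:
  assumes "\<forall>x\<in>set ss. snd x h \<in> carrier_mat (fst x) (fst x)"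
  shows "dsum_rep ss h \<in> carrier_mat (dsum_dim ss) (dsum_dim ss)"
  using assms by (induction ss) auto

lemma dsum_mat_rep:
  assumes "\<forall>x\<in>set ss. mat_rep G (fst x) (snd x)"
  shows "mat_rep G (dsum_dim ss) (dsum_rep ss)"
  using assms
proof (induction ss)
  case Nil
  then show ?case by (simp add: mat_rep_def)
next
  case (Cons x ss)
  then have IH: "mat_rep G (dsum_dim ss) (dsum_rep ss)" and X: "mat_rep G (fst x) (snd x)" by auto
  show ?case unfolding mat_rep_def
  proof (intro conjI ballI)
    fix h assume "h \<in> carrier G"
    then show "dsum_rep (x # ss) h \<in> carrier_mat (dsum_dim (x # ss)) (dsum_dim (x # ss))"
      using IH X unfolding mat_rep_def by auto
  next
    show "dsum_rep (x # ss) \<one>\<^bsub>G\<^esub> = 1\<^sub>m (dsum_dim (x # ss))"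
      using IH X unfolding mat_rep_def by auto
  next
    fix g h assume g: "g \<in> carrier G" and h: "h \<in> carrier G"
    have c: "snd x g \<in> carrier_mat (fst x) (fst x)" "snd x h \<in> carrier_mat (fst x) (fst x)"
      "dsum_rep ss g \<in> carrier_mat (dsum_dim ss) (dsum_dim ss)" "dsum_rep ss h \<in> carrier_mat (dsum_dim ss) (dsum_dim ss)"
      using IH X g h unfolding mat_rep_def by auto
    show "dsum_rep (x # ss) (g \<otimes>\<^bsub>G\<^esub> h) = dsum_rep (x # ss) g * dsum_rep (x # ss) h"
      using IH X g h c unfolding mat_rep_def
      by (simp add: mult_four_block_mat[OF c(1) _ _ c(3) c(2) _ _ c(4)]
         right_mult_zero_mat[OF c(1)] left_mult_zero_mat[OF c(4)]
         right_mult_zero_mat[OF c(3)] left_mult_zero_mat[OF c(2)]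
         right_add_zero_mat[OF mult_carrier_mat[OF c(1) c(2)]] left_add_zero_mat[OF mult_carrier_mat[OF c(3) c(4)]])
  qed
qed

lemma dsum_one_components:
  assumes "\<forall>x\<in>set ss. snd x h \<in> carrier_mat (fst x) (fst x)"
    and "dsum_rep ss h = 1\<^sub>m (dsum_dim ss)"
  shows "\<forall>x\<in>set ss. snd x h = 1\<^sub>m (fst x)"
  using assms
proof (induction ss)
  case Nil then show ?case by simp
next
  case (Cons x ss)
  have c: "snd x h \<in> carrier_mat (fst x) (fst x)" using Cons.prems by auto
  have c2: "dsum_rep ss h \<in> carrier_mat (dsum_dim ss) (dsum_dim ss)"
    using dsum_carrier Cons.prems by auto
  have eq: "four_block_mat (snd x h) (0\<^sub>m (fst x) (dsum_dim ss)) (0\<^sub>m (dsum_dim ss) (fst x)) (dsum_rep ss h)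
     = 1\<^sub>m (fst x + dsum_dim ss)" using Cons.prems by simp
  have A: "snd x h = 1\<^sub>m (fst x)"
  proof (rule eq_matI)
    fix i j assume "i < dim_row (1\<^sub>m (fst x))" "j < dim_col (1\<^sub>m (fst x))"
    then have ij: "i < fst x" "j < fst x" by auto
    have "four_block_mat (snd x h) (0\<^sub>m (fst x) (dsum_dim ss)) (0\<^sub>m (dsum_dim ss) (fst x)) (dsum_rep ss h) $$ (i,j)
      = 1\<^sub>m (fst x + dsum_dim ss) $$ (i,j)" using eq by simp
    then show "snd x h $$ (i, j) = 1\<^sub>m (fst x) $$ (i, j)" using ij c c2 by simp
  qed (use c in auto)
  have D: "dsum_rep ss h = 1\<^sub>m (dsum_dim ss)"
  proof (rule eq_matI)
    fix i j assume "i < dim_row (1\<^sub>m (dsum_dim ss))" "j < dim_col (1\<^sub>m (dsum_dim ss))"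
    then have ij: "i < dsum_dim ss" "j < dsum_dim ss" by auto
    have "four_block_mat (snd x h) (0\<^sub>m (fst x) (dsum_dim ss)) (0\<^sub>m (dsum_dim ss) (fst x)) (dsum_rep ss h) $$ (fst x + i, fst x + j)
      = 1\<^sub>m (fst x + dsum_dim ss) $$ (fst x + i, fst x + j)" using eq by simp
    then show "dsum_rep ss h $$ (i, j) = 1\<^sub>m (dsum_dim ss) $$ (i, j)" using ij c c2 by simp
  qed (use c2 in auto)
  show ?case using A Cons.IH[OF _ D] Cons.prems(1) by auto
qed

lemma dsum_dim_ge: "x \<in> set ss \<Longrightarrow> fst x \<le> dsum_dim ss"
  by (induction ss) auto

lemma trivial_irrep_W:
  assumes W: "is_subspace 1 W"
  shows "W = {0\<^sub>v 1} \<or> W = (carrier_vec 1 :: complex vec set)"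
proof (cases "W = {0\<^sub>v 1}")
  case False
  have W0: "0\<^sub>v 1 \<in> W" and Wc: "W \<subseteq> carrier_vec 1" using W unfolding is_subspace_def by auto
  obtain w where w: "w \<in> W" "w \<noteq> 0\<^sub>v 1" using False W0 by blast
  have wc: "w \<in> carrier_vec 1" using w Wc by auto
  have w0: "w $ 0 \<noteq> 0"
  proof
    assume "w $ 0 = 0"
    then have "w = 0\<^sub>v 1" using wc by (intro eq_vecI) auto
    then show False using w by simp
  qed
  have "v \<in> W" if v: "v \<in> carrier_vec 1" for v
  proof -
    have "(v $ 0 / w $ 0) \<cdot>\<^sub>v w = v" using v wc w0 by (intro eq_vecI) auto
    moreover have "(v $ 0 / w $ 0) \<cdot>\<^sub>v w \<in> W" using W w unfolding is_subspace_def by auto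
    ultimately show ?thesis by simp
  qed
  then show ?thesis using Wc by blast
qed simp

lemma trivial_irrep:
  shows "irreducible_rep G 1 (\<lambda>h. 1\<^sub>m 1)"
  unfolding irreducible_rep_def mat_rep_def using trivial_irrep_W by auto

lemma sigma_faithful_one:
  fixes G :: "('g,'b) monoid_scheme"
  assumes G: "group G" and fin: "finite (carrier G)" and C: "complete_irreps G ss"
    and g: "g \<in> carrier G" and s1: "dsum_rep ss g = 1\<^sub>m (dsum_dim ss)"
  shows "g = \<one>\<^bsub>G\<^esub>"
proof (rule ccontr)
  assume g1: "g \<noteq> \<one>\<^bsub>G\<^esub>"
  obtain d \<rho> where "urep G d \<rho>" "d > 0" "\<rho> g \<noteq> 1\<^sub>m d" using regular_urep[OF G fin g g1] by blast
  then obtain e \<tau> where irr: "irreducible_rep G e \<tau>" and tg: "\<tau> g \<noteq> 1\<^sub>m e"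
    using exists_irrep_nontriv[OF G g] by blast
  obtain x where x: "x \<in> set ss" and eq: "equiv_rep G e \<tau> (fst x) (snd x)"
    using C irr unfolding complete_irreps_def by blast
  have reps: "\<forall>x\<in>set ss. snd x g \<in> carrier_mat (fst x) (fst x)"
    using C g unfolding complete_irreps_def irreducible_rep_def mat_rep_def by auto
  have sx: "snd x g = 1\<^sub>m (fst x)" using dsum_one_components[OF reps s1] x by auto
  obtain T where T: "T \<in> carrier_mat e e" "invertible_mat T" "T * \<tau> g = snd x g * T" and ef: "e = fst x"
    using eq g unfolding equiv_rep_def by blast
  have tc: "\<tau> g \<in> carrier_mat e e" using irr g unfolding irreducible_rep_def mat_rep_def by auto
  obtain T' where T'1: "T * T' = 1\<^sub>m (dim_row T)" and T': "T' * T = 1\<^sub>m (dim_row T')"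
    using T(2) unfolding invertible_mat_def inverts_mat_def by blast
  have c1: "dim_col T' = e" using arg_cong[OF T'1, of dim_col] T(1) by simp
  have r1: "dim_row T' = e" using arg_cong[OF T', of dim_col] T(1) by simp
  have T'c: "T' \<in> carrier_mat e e" by (rule carrier_matI[OF r1 c1])
  have "T * \<tau> g = T" using T(3) sx ef T(1) by simp
  then have "T' * (T * \<tau> g) = T' * T" by simp
  then have "(T' * T) * \<tau> g = T' * T" using assoc_mult_mat[OF T'c T(1) tc] by simp
  then have "\<tau> g = 1\<^sub>m e" using T' T'c tc by simp
  then show False using tg by simp
qed

lemma sigma_pos:
  assumes G: "group G" and C: "complete_irreps G ss"
  shows "dsum_dim ss > 0"
proof -
  obtain x where x: "x \<in> set ss" and eq: "equiv_rep G 1 (\<lambda>h. 1\<^sub>m 1) (fst x) (snd x)"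
    using C trivial_irrep unfolding complete_irreps_def by blast
  have "fst x = 1" using eq unfolding equiv_rep_def by auto
  then show ?thesis using dsum_dim_ge[OF x] by simp
qed



lemma blk_idx: assumes "k > 0" "v < (k::nat)" shows "(l*k+v) div k = l" "(l*k+v) mod k = v"
proof -
  have "(l*k+v) div k = l + v div k" using assms by simp
  then show "(l*k+v) div k = l" using assms by simp
  have "(l*k+v) mod k = v mod k" by simp
  then show "(l*k+v) mod k = v" using assms by simp
qed

lemma neq_blk: assumes "k > 0" "v < (k::nat)" "l1 \<noteq> l2" shows "l2*k+v \<noteq> l1*k"
proof
  assume e: "l2*k+v = l1*k"
  have "(l2*k+v) div k = l2" using blk_idx[OF assms(1,2)] by simp
  moreover have "(l1*k) div k = l1" using assms(1) by simp
  ultimately show False using e assms(3) by simp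
qed

lemma blk_lt: assumes "l < m" "v < (k::nat)" shows "l*k+v < m*k"
proof -
  have "l*k+v < l*k+k" using assms by simp
  also have "\<dots> = (l+1)*k" by simp
  also have "\<dots> \<le> m*k" using assms by (intro mult_le_mono1) simp
  finally show ?thesis .
qed

lemma div_lt: assumes "u < m*k" shows "u div k < (m::nat)"
  using assms by (metis div_less_iff_less_mult mult.commute mult_zero_left not_less_zero neq0_conv)

lemma sum_block:
  fixes f :: "nat \<Rightarrow> 'a::comm_monoid_add"
  assumes k: "k > 0" and i: "i < m"
  shows "(\<Sum>u<m*k. if u div k = i then f (u mod k) else 0) = (\<Sum>v<k. f v)"
proof -
  have "(\<Sum>u<m*k. if u div k = i then f (u mod k) else 0)
      = (\<Sum>l<m. \<Sum>u\<in>{l*k..<l*k+k}. if u div k = i then f (u mod k) else 0)"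
    by (rule sum.nat_group[symmetric])
  also have "\<dots> = (\<Sum>l<m. if l = i then (\<Sum>v<k. f v) else 0)"
  proof (rule sum.cong[OF refl])
    fix l assume "l \<in> {..<m}"
    have "(\<Sum>u\<in>{l*k..<l*k+k}. if u div k = i then f (u mod k) else 0)
        = (\<Sum>v\<in>{0..<k}. if (v+l*k) div k = i then f ((v+l*k) mod k) else 0)"
      using sum.shift_bounds_nat_ivl[of "\<lambda>u. if u div k = i then f (u mod k) else 0" 0 "l*k" k]
      by (simp only: add.commute[of "l*k" k] add_0)
    also have "\<dots> = (\<Sum>v\<in>{0..<k}. if l = i then f v else 0)"
      by (rule sum.cong) (use k in auto)
    also have "\<dots> = (if l = i then (\<Sum>v<k. f v) else 0)" by (simp add: lessThan_atLeast0)
    finally show "(\<Sum>u\<in>{l*k..<l*k+k}. if u div k = i then f (u mod k) else 0) = (if l = i then (\<Sum>v<k. f v) else 0)" .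
  qed
  also have "\<dots> = (\<Sum>v<k. f v)" using i by simp
  finally show ?thesis .
qed

definition blk :: "nat \<Rightarrow> nat \<Rightarrow> nat \<Rightarrow> nat \<Rightarrow> complex mat \<Rightarrow> complex mat" where
  "blk N k i i' X = mat N N (\<lambda>(r,c). if r div k = i \<and> c div k = i' then X $$ (r mod k, c mod k) else 0)"

lemma blk_carrier[simp]: "blk N k i i' X \<in> carrier_mat N N" unfolding blk_def by auto
lemma blk_dims[simp]: "dim_row (blk N k i i' X) = N" "dim_col (blk N k i i' X) = N" unfolding blk_def by auto
lemma blk_index: "r < N \<Longrightarrow> c < N \<Longrightarrow> blk N k i i' X $$ (r,c) = (if r div k = i \<and> c div k = i' then X $$ (r mod k, c mod k) else 0)"
  unfolding blk_def by auto

lemma blk_mult: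
  assumes k: "k > 0" and i: "i < m" "i' < m" "i'' < m" and X: "X \<in> carrier_mat k k" and Y: "Y \<in> carrier_mat k k"
  shows "blk (m*k) k i i' X * blk (m*k) k i' i'' Y = blk (m*k) k i i'' (X * Y)"
proof (rule eq_matI)
  fix r c assume "r < dim_row (blk (m*k) k i i'' (X * Y))" "c < dim_col (blk (m*k) k i i'' (X * Y))"
  then have r: "r < m*k" and c: "c < m*k" by auto
  have rk: "r mod k < k" "c mod k < k" using k by auto
  have "(blk (m*k) k i i' X * blk (m*k) k i' i'' Y) $$ (r,c)
     = (\<Sum>u<m*k. blk (m*k) k i i' X $$ (r,u) * blk (m*k) k i' i'' Y $$ (u,c))"
    using r c by (simp add: scalar_prod_def lessThan_atLeast0)
  also have "\<dots> = (\<Sum>u<m*k. if u div k = i' then (if r div k = i \<and> c div k = i'' then X $$ (r mod k, u mod k) * Y $$ (u mod k, c mod k) else 0) else 0)"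
    by (rule sum.cong) (use r c in \<open>auto simp: blk_index\<close>)
  also have "\<dots> = (\<Sum>v<k. if r div k = i \<and> c div k = i'' then X $$ (r mod k, v) * Y $$ (v, c mod k) else 0)"
    by (rule sum_block[OF k i(2)])
  also have "\<dots> = blk (m*k) k i i'' (X * Y) $$ (r,c)"
    using r c X Y rk by (auto simp: blk_index scalar_prod_def lessThan_atLeast0)
  finally show "(blk (m*k) k i i' X * blk (m*k) k i' i'' Y) $$ (r,c) = blk (m*k) k i i'' (X * Y) $$ (r,c)" .
qed auto

lemma blk_adj: "adjm (blk N k i i' X) = blk N k i' i (adjm X)" if "X \<in> carrier_mat k k" "k > 0"
  by (rule eq_matI) (use that in \<open>auto simp: blk_index\<close>)

lemma blk_entry:
  assumes k: "k > 0" and i: "i < m" "i' < m" and t: "t < k" "v < k"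
  shows "blk (m*k) k i i' X $$ (i*k+t, i'*k+v) = X $$ (t,v)"
  using blk_index[OF blk_lt[OF i(1) t(1)] blk_lt[OF i(2) t(2)]] k t by simp

lemma blk_inj:
  assumes k: "k > 0" and i: "i < m" "i' < m" and X: "X \<in> carrier_mat k k" and Y: "Y \<in> carrier_mat k k"
    and eq: "blk (m*k) k i i' X = blk (m*k) k i i' Y"
  shows "X = Y"
proof (rule eq_matI)
  fix t v assume "t < dim_row Y" "v < dim_col Y"
  then have t: "t < k" "v < k" using Y by auto
  show "X $$ (t,v) = Y $$ (t,v)" using blk_entry[OF k i t, of X] blk_entry[OF k i t, of Y] eq by simp
qed (use X Y in auto)

lemma blk_pos:
  assumes k: "k > 0" and i: "i < m" "i' < m" "j < m" "j' < m" and t: "t < k" "v < k"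
    and nz: "X $$ (t,v) \<noteq> 0"
    and eq: "blk (m*k) k i i' X = blk (m*k) k j j' Y"
  shows "i = j \<and> i' = j'"
proof -
  have "blk (m*k) k j j' Y $$ (i*k+t, i'*k+v) \<noteq> 0" using blk_entry[OF k i(1,2) t, of X] nz eq by simp
  then show ?thesis using blk_index[OF blk_lt[OF i(1) t(1)] blk_lt[OF i(2) t(2)]] k t
    by (auto split: if_splits)
qed

lemma inv_row_nz:
  fixes Z W :: "complex mat"
  assumes k: "k > 0" and Z: "Z \<in> carrier_mat k k" and W: "W \<in> carrier_mat k k" and ZW: "Z * W = 1\<^sub>m k"
  shows "\<exists>v<k. Z $$ (0,v) \<noteq> 0"
proof (rule ccontr)
  assume "\<not> (\<exists>v<k. Z $$ (0,v) \<noteq> 0)"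
  then have "(Z * W) $$ (0,0) = 0" using Z W k by (simp add: scalar_prod_def)
  then show False using ZW k by simp
qed

lemma inv_col_nz:
  fixes Z W :: "complex mat"
  assumes k: "k > 0" and Z: "Z \<in> carrier_mat k k" and W: "W \<in> carrier_mat k k" and ZW: "W * Z = 1\<^sub>m k"
  shows "\<exists>v<k. Z $$ (v,0) \<noteq> 0"
proof (rule ccontr)
  assume "\<not> (\<exists>v<k. Z $$ (v,0) \<noteq> 0)"
  then have "(W * Z) $$ (0,0) = 0" using Z W k by (simp add: scalar_prod_def)
  then show False using ZW k by simp
qed



lemma sum_sq_one_other_zero:
  fixes f :: "nat \<Rightarrow> real"
  assumes "(\<Sum>u<N. f u) = 1" "\<And>u. f u \<ge> 0" "c < N" "c' < N" "c' \<noteq> c" "f c = 1"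
  shows "f c' = 0"
proof -
  have "(\<Sum>u\<in>{c,c'}. f u) \<le> (\<Sum>u<N. f u)"
    by (rule sum_mono2) (use assms in auto)
  then have "f c + f c' \<le> 1" using assms by simp
  then show ?thesis using assms(2)[of c'] assms(6) by simp
qed

lemma semiunit_row:
  fixes A :: "complex mat"
  assumes A: "A \<in> carrier_mat N N" and su: "A * adjm A * A = A" and rc: "r < N" "c < N"
    and one: "A $$ (r,c) = 1" and col: "\<And>t. t < N \<Longrightarrow> t \<noteq> r \<Longrightarrow> A $$ (t,c) = 0"
    and c': "c' < N" "c' \<noteq> c"
  shows "A $$ (r,c') = 0"
proof -
  have aA: "adjm A \<in> carrier_mat N N" using A by simp
  have "(A * adjm A * A) $$ (r,c) = (\<Sum>t\<in>{0..<N}. (A * adjm A) $$ (r,t) * A $$ (t,c))"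
    using A rc by (simp add: scalar_prod_def)
  also have "\<dots> = (\<Sum>t\<in>{0..<N}. if t = r then (A * adjm A) $$ (r,r) else 0)"
    by (rule sum.cong) (use col one in auto)
  also have "\<dots> = (A * adjm A) $$ (r,r)" using rc by simp
  also have "\<dots> = (\<Sum>u\<in>{0..<N}. A $$ (r,u) * cnj (A $$ (r,u)))"
    using A rc by (simp add: scalar_prod_def)
  also have "\<dots> = complex_of_real (\<Sum>u<N. (cmod (A $$ (r,u)))^2)"
    by (simp add: mult_cnj_real of_real_sum lessThan_atLeast0)
  finally have "complex_of_real (\<Sum>u<N. (cmod (A $$ (r,u)))^2) = 1" using su one by simp
  then have s1: "(\<Sum>u<N. (cmod (A $$ (r,u)))^2) = 1" by (metis of_real_eq_1_iff)
  have "(cmod (A $$ (r,c')))^2 = 0"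
    by (rule sum_sq_one_other_zero[OF s1, of c c']) (use rc c' one in auto)
  then show ?thesis by simp
qed

lemma semiunit_col:
  fixes A :: "complex mat"
  assumes A: "A \<in> carrier_mat N N" and su: "A * adjm A * A = A" and rc: "r < N" "c < N"
    and one: "A $$ (r,c) = 1" and row: "\<And>t. t < N \<Longrightarrow> t \<noteq> c \<Longrightarrow> A $$ (r,t) = 0"
    and r': "r' < N" "r' \<noteq> r"
  shows "A $$ (r',c) = 0"
proof -
  have aA: "adjm A \<in> carrier_mat N N" using A by simp
  have "A * adjm A * A = A * (adjm A * A)" using assoc_mult_mat[OF A aA A] .
  then have "(A * (adjm A * A)) $$ (r,c) = 1" using su one by simp
  moreover have "(A * (adjm A * A)) $$ (r,c) = (\<Sum>t\<in>{0..<N}. A $$ (r,t) * (adjm A * A) $$ (t,c))"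
    using A rc by (simp add: scalar_prod_def)
  moreover have "\<dots> = (\<Sum>t\<in>{0..<N}. if t = c then (adjm A * A) $$ (c,c) else 0)"
    by (rule sum.cong) (use row one in auto)
  moreover have "\<dots> = (adjm A * A) $$ (c,c)" using rc by simp
  moreover have "\<dots> = (\<Sum>u\<in>{0..<N}. A $$ (u,c) * cnj (A $$ (u,c)))"
    using A rc by (simp add: scalar_prod_def mult.commute)
  moreover have "\<dots> = complex_of_real (\<Sum>u<N. (cmod (A $$ (u,c)))^2)"
    by (simp add: mult_cnj_real of_real_sum lessThan_atLeast0)
  ultimately have "complex_of_real (\<Sum>u<N. (cmod (A $$ (u,c)))^2) = 1" by simp
  then have s1: "(\<Sum>u<N. (cmod (A $$ (u,c)))^2) = 1" by (metis of_real_eq_1_iff)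
  have "(cmod (A $$ (r',c)))^2 = 0"
    by (rule sum_sq_one_other_zero[OF s1, of r r']) (use rc r' one in auto)
  then show ?thesis by simp
qed



locale rees_setting =
  fixes G :: "('g,'b) monoid_scheme" (structure) and m n k :: nat and P :: "nat \<Rightarrow> nat \<Rightarrow> 'g option"
    and \<sigma> :: "'g \<Rightarrow> complex mat"
  assumes grp: "group G" and sw: "sandwich_matrix G m n P" and reg: "regular_sandwich m n P"
    and rep: "mat_rep G k \<sigma>" and kpos: "k > 0"
    and faithful: "\<And>x y. x \<in> carrier G \<Longrightarrow> y \<in> carrier G \<Longrightarrow> \<sigma> x = \<sigma> y \<Longrightarrow> x = y"
begin

lemma sig_carrier[simp]: "h \<in> carrier G \<Longrightarrow> \<sigma> h \<in> carrier_mat k k"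
  using rep unfolding mat_rep_def by auto
lemma sig_one[simp]: "\<sigma> \<one>\<^bsub>G\<^esub> = 1\<^sub>m k"
  using rep unfolding mat_rep_def by auto
lemma sig_mult: "x \<in> carrier G \<Longrightarrow> y \<in> carrier G \<Longrightarrow> \<sigma> (x \<otimes>\<^bsub>G\<^esub> y) = \<sigma> x * \<sigma> y"
  using rep unfolding mat_rep_def by auto
lemma sig_inv_r: "x \<in> carrier G \<Longrightarrow> \<sigma> x * \<sigma> (inv\<^bsub>G\<^esub> x) = 1\<^sub>m k"
  using sig_mult[of x "inv\<^bsub>G\<^esub> x"] grp by (simp add: group.r_inv)
lemma sig_inv_l: "x \<in> carrier G \<Longrightarrow> \<sigma> (inv\<^bsub>G\<^esub> x) * \<sigma> x = 1\<^sub>m k"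
  using sig_mult[of "inv\<^bsub>G\<^esub> x" x] grp by (simp add: group.l_inv)

lemma Pc: "j < n \<Longrightarrow> i < m \<Longrightarrow> P j i = Some p \<Longrightarrow> p \<in> carrier G"
  using sw unfolding sandwich_matrix_def by auto

lemma Sc: "Some (a,i,j) \<in> rees_carrier G m n \<longleftrightarrow> a \<in> carrier G \<and> i < m \<and> j < n"
  unfolding rees_carrier_def by auto

lemma piL_carrier[simp]: "pi_l G P m k \<sigma> s \<in> carrier_mat (m*k) (m*k)"
  by (cases s) (auto simp: pi_l_def)
lemma piR_carrier[simp]: "pi_r G P n k \<sigma> s \<in> carrier_mat (n*k) (n*k)"
  by (cases s) (auto simp: pi_r_def)

lemma piL_entry: "r < m*k \<Longrightarrow> c < m*k \<Longrightarrow> pi_l G P m k \<sigma> (Some (a,i,j)) $$ (r,c) =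
   (if r div k = i then ext_rep k \<sigma> (map_option (\<lambda>p. a \<otimes>\<^bsub>G\<^esub> p) (P j (c div k))) $$ (r mod k, c mod k) else 0)"
  by (simp add: pi_l_def)
lemma piR_entry: "r < n*k \<Longrightarrow> c < n*k \<Longrightarrow> pi_r G P n k \<sigma> (Some (a,i,j)) $$ (r,c) =
   (if c div k = j then ext_rep k \<sigma> (map_option (\<lambda>p. p \<otimes>\<^bsub>G\<^esub> a) (P (r div k) i)) $$ (r mod k, c mod k) else 0)"
  by (simp add: pi_r_def)

lemma mod_nz: "t div k = l \<Longrightarrow> t \<noteq> l*k \<Longrightarrow> t mod k \<noteq> (0::nat)"
  by (metis add.right_neutral div_mult_mod_eq)

lemma rowU:
  assumes su: "semiunitary (rees_carrier G m n) (pi_l G P m k \<sigma>)"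
    and j: "j < n" and l: "l1 < m" "l2 < m" and p1: "P j l1 = Some p1" and p2: "P j l2 = Some p2"
  shows "l1 = l2"
proof (rule ccontr)
  assume ne: "l1 \<noteq> l2"
  interpret group G by (rule grp)
  have p1c: "p1 \<in> carrier G" and p2c: "p2 \<in> carrier G" using Pc j l p1 p2 by auto
  define s where "s = Some (inv p1, l1, j)"
  have sS: "s \<in> rees_carrier G m n" unfolding s_def Sc using p1c j l by auto
  define A where "A = pi_l G P m k \<sigma> s"
  have A: "A \<in> carrier_mat (m*k) (m*k)" unfolding A_def by simp
  have suA: "A * adjm A * A = A" using su sS unfolding semiunitary_def A_def by auto
  have r: "l1*k < m*k" using blk_lt[OF l(1) kpos] by simp
  have e1: "A $$ (l1*k, l1*k) = 1"
    unfolding A_def s_def using piL_entry[OF r r] p1 kpos p1c by (simp add: ext_rep_def)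
  have col: "A $$ (t, l1*k) = 0" if t: "t < m*k" "t \<noteq> l1*k" for t
  proof -
    have "A $$ (t, l1*k) = (if t div k = l1 then (1\<^sub>m k) $$ (t mod k, 0) else 0)"
      unfolding A_def s_def using piL_entry[OF t(1) r] p1 kpos p1c by (simp add: ext_rep_def)
    then show ?thesis using mod_nz[of t l1] t kpos by auto
  qed
  have z: "\<sigma> (inv p1 \<otimes> p2) $$ (0,v) = 0" if v: "v < k" for v
  proof -
    have c': "l2*k+v < m*k" using blk_lt[OF l(2) v] .
    have "A $$ (l1*k, l2*k+v) = 0"
      by (rule semiunit_row[OF A suA r r e1 col c']) (use neq_blk[OF kpos v ne] in auto)
    then show ?thesis unfolding A_def s_def using piL_entry[OF r c'] p2 kpos v
      by (simp add: ext_rep_def)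
  qed
  have xc: "inv p1 \<otimes> p2 \<in> carrier G" using p1c p2c by simp
  obtain v where "v < k" "\<sigma> (inv p1 \<otimes> p2) $$ (0,v) \<noteq> 0"
    using inv_row_nz[OF kpos sig_carrier[OF xc] sig_carrier[OF inv_closed[OF xc]] sig_inv_r[OF xc]] by blast
  then show False using z by simp
qed

lemma colU:
  assumes su: "semiunitary (rees_carrier G m n) (pi_r G P n k \<sigma>)"
    and i: "i < m" and j: "j1 < n" "j2 < n" and p1: "P j1 i = Some p1" and p2: "P j2 i = Some p2"
  shows "j1 = j2"
proof (rule ccontr)
  assume ne: "j1 \<noteq> j2"
  interpret group G by (rule grp)
  have p1c: "p1 \<in> carrier G" and p2c: "p2 \<in> carrier G" using Pc j i p1 p2 by auto
  define s where "s = Some (inv p1, i, j1)"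
  have sS: "s \<in> rees_carrier G m n" unfolding s_def Sc using p1c j i by auto
  define A where "A = pi_r G P n k \<sigma> s"
  have A: "A \<in> carrier_mat (n*k) (n*k)" unfolding A_def by simp
  have suA: "A * adjm A * A = A" using su sS unfolding semiunitary_def A_def by auto
  have r: "j1*k < n*k" using blk_lt[OF j(1) kpos] by simp
  have e1: "A $$ (j1*k, j1*k) = 1"
    unfolding A_def s_def using piR_entry[OF r r] p1 kpos p1c by (simp add: ext_rep_def)
  have row: "A $$ (j1*k, t) = 0" if t: "t < n*k" "t \<noteq> j1*k" for t
  proof -
    have "A $$ (j1*k, t) = (if t div k = j1 then (1\<^sub>m k) $$ (0, t mod k) else 0)"
      unfolding A_def s_def using piR_entry[OF r t(1)] p1 kpos p1c by (simp add: ext_rep_def)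
    then show ?thesis using mod_nz[of t j1] t kpos by auto
  qed
  have z: "\<sigma> (p2 \<otimes> inv p1) $$ (v,0) = 0" if v: "v < k" for v
  proof -
    have r': "j2*k+v < n*k" using blk_lt[OF j(2) v] .
    have "A $$ (j2*k+v, j1*k) = 0"
      by (rule semiunit_col[OF A suA r r e1 row r']) (use neq_blk[OF kpos v ne] in auto)
    then show ?thesis unfolding A_def s_def using piR_entry[OF r' r] p2 kpos v
      by (simp add: ext_rep_def)
  qed
  have xc: "p2 \<otimes> inv p1 \<in> carrier G" using p1c p2c by simp
  obtain v where "v < k" "\<sigma> (p2 \<otimes> inv p1) $$ (v,0) \<noteq> 0"
    using inv_col_nz[OF kpos sig_carrier[OF xc] sig_carrier[OF inv_closed[OF xc]] sig_inv_l[OF xc]] by blast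
  then show False using z by simp
qed

end



context rees_setting begin

lemma piL_blk:
  assumes a: "a \<in> carrier G" and i: "i < m" and j: "j < n" and i': "i' < m" and p: "P j i' = Some p"
    and uniq: "\<And>l. l < m \<Longrightarrow> P j l \<noteq> None \<Longrightarrow> l = i'"
  shows "pi_l G P m k \<sigma> (Some (a,i,j)) = blk (m*k) k i i' (\<sigma> (a \<otimes>\<^bsub>G\<^esub> p))"
proof (rule eq_matI)
  fix r c assume "r < dim_row (blk (m*k) k i i' (\<sigma> (a \<otimes>\<^bsub>G\<^esub> p)))" "c < dim_col (blk (m*k) k i i' (\<sigma> (a \<otimes>\<^bsub>G\<^esub> p)))"
  then have r: "r < m*k" and c: "c < m*k" by auto
  have cm: "c div k < m" using div_lt[OF c] .
  have rk: "r mod k < k" "c mod k < k" using kpos by auto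
  show "pi_l G P m k \<sigma> (Some (a,i,j)) $$ (r,c) = blk (m*k) k i i' (\<sigma> (a \<otimes>\<^bsub>G\<^esub> p)) $$ (r,c)"
  proof (cases "c div k = i'")
    case True
    then show ?thesis using piL_entry[OF r c] blk_index[OF r c] p by (simp add: ext_rep_def)
  next
    case False
    then have "P j (c div k) = None" using uniq[OF cm] by (cases "P j (c div k)") auto
    then show ?thesis using piL_entry[OF r c] blk_index[OF r c] False rk by (simp add: ext_rep_def)
  qed
qed (simp_all add: pi_l_def)

lemma galg1: assumes "a \<in> carrier G" "p \<in> carrier G" "c \<in> carrier G" "q \<in> carrier G"
  and "c \<otimes> q = inv (a \<otimes> p)"
  shows "a \<otimes> p \<otimes> c \<otimes> q \<otimes> a = a"
    and "c \<otimes> q \<otimes> a \<otimes> p \<otimes> c = c"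
proof -
  interpret group G by (rule grp)
  have ap: "a \<otimes> p \<in> carrier G" using assms by simp
  have "a \<otimes> p \<otimes> c \<otimes> q = (a \<otimes> p) \<otimes> (c \<otimes> q)" using assms(1-4) by (simp add: m_assoc)
  also have "\<dots> = (a \<otimes> p) \<otimes> inv (a \<otimes> p)" using assms(5) by (simp only:)
  also have "\<dots> = \<one>" by (rule r_inv[OF ap])
  finally have e1: "a \<otimes> p \<otimes> c \<otimes> q = \<one>" .
  show "a \<otimes> p \<otimes> c \<otimes> q \<otimes> a = a" by (simp only: e1 l_one[OF assms(1)])
  have "c \<otimes> q \<otimes> a \<otimes> p = (c \<otimes> q) \<otimes> (a \<otimes> p)" using assms(1-4) by (simp add: m_assoc)
  also have "\<dots> = inv (a \<otimes> p) \<otimes> (a \<otimes> p)" using assms(5) by (simp only:)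
  also have "\<dots> = \<one>" by (rule l_inv[OF ap])
  finally have e2: "c \<otimes> q \<otimes> a \<otimes> p = \<one>" .
  show "c \<otimes> q \<otimes> a \<otimes> p \<otimes> c = c" by (simp only: e2 l_one[OF assms(3)])
qed

lemma galg2: assumes "a \<in> carrier G" "p \<in> carrier G" "c \<in> carrier G" "q \<in> carrier G"
  and "a \<otimes> p \<otimes> c \<otimes> q \<otimes> a = a"
  shows "c \<otimes> q = inv (a \<otimes> p)"
proof -
  interpret group G by (rule grp)
  have ap: "a \<otimes> p \<in> carrier G" and cq: "c \<otimes> q \<in> carrier G" using assms by auto
  have "a \<otimes> p \<otimes> c \<otimes> q = (a \<otimes> p) \<otimes> (c \<otimes> q)" using assms(1-4) by (simp add: m_assoc)
  then have "((a \<otimes> p) \<otimes> (c \<otimes> q)) \<otimes> a = \<one> \<otimes> a" using assms(5) l_one[OF assms(1)] by simp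
  then have "(a \<otimes> p) \<otimes> (c \<otimes> q) = \<one>" using right_cancel[OF assms(1) m_closed[OF ap cq] one_closed] by simp
  then have "(c \<otimes> q) \<otimes> (a \<otimes> p) = \<one>" using inv_comm ap cq by blast
  then show ?thesis using inv_equality[OF _ ap cq] by simp
qed

lemma uniq_row: assumes su: "semiunitary (rees_carrier G m n) (pi_l G P m k \<sigma>)" and j: "j < n"
  and i': "i' < m" and p: "P j i' = Some p"
  shows "\<And>l. l < m \<Longrightarrow> P j l \<noteq> None \<Longrightarrow> l = i'"
  using rowU[OF su j _ i' _ p] by auto

lemma part1:
  assumes sl: "semiunitary (rees_carrier G m n) (pi_l G P m k \<sigma>)"
    and sr: "semiunitary (rees_carrier G m n) (pi_r G P n k \<sigma>)"
  shows "inverse_semigroup (rees_carrier G m n) (rees_mult G P)"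
  unfolding inverse_semigroup_def
proof
  interpret group G by (rule grp)
  fix x assume xS: "x \<in> rees_carrier G m n"
  show "\<exists>!b. b \<in> rees_carrier G m n \<and> rees_mult G P (rees_mult G P x b) x = x \<and> rees_mult G P (rees_mult G P b x) b = b"
  proof (cases x)
    case None
    show ?thesis
    proof (rule ex1I[of _ None])
      show "None \<in> rees_carrier G m n \<and> rees_mult G P (rees_mult G P x None) x = x \<and> rees_mult G P (rees_mult G P None x) None = None"
        using None by (simp add: rees_carrier_def)
      fix b assume "b \<in> rees_carrier G m n \<and> rees_mult G P (rees_mult G P x b) x = x \<and> rees_mult G P (rees_mult G P b x) b = b"
      then show "b = None" using None by (cases b) auto
    qed
  next
    case (Some t)
    then obtain a i j where x: "x = Some (a,i,j)" by (cases t) auto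
    have a: "a \<in> carrier G" and i: "i < m" and j: "j < n" using xS x Sc by auto
    obtain i' p where i': "i' < m" and p: "P j i' = Some p" using reg j unfolding regular_sandwich_def by blast
    obtain j' q where j': "j' < n" and q: "P j' i = Some q" using reg i unfolding regular_sandwich_def by blast
    have pc: "p \<in> carrier G" and qc: "q \<in> carrier G" using Pc i j i' j' p q by auto
    define c where "c = inv p \<otimes> inv a \<otimes> inv q"
    have cc: "c \<in> carrier G" unfolding c_def using a pc qc by simp
    have cq: "c \<otimes> q = inv (a \<otimes> p)" unfolding c_def using a pc qc by (simp add: m_assoc inv_mult_group)
    note g1 = galg1[OF a pc cc qc cq]
    show ?thesis
    proof (rule ex1I[of _ "Some (c, i', j')"])
      show "Some (c, i', j') \<in> rees_carrier G m n \<and>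
        rees_mult G P (rees_mult G P x (Some (c, i', j'))) x = x \<and>
        rees_mult G P (rees_mult G P (Some (c, i', j')) x) (Some (c, i', j')) = Some (c, i', j')"
        using x p q g1 cc i' j' by (simp add: Sc)
      fix b assume b: "b \<in> rees_carrier G m n \<and> rees_mult G P (rees_mult G P x b) x = x \<and> rees_mult G P (rees_mult G P b x) b = b"
      show "b = Some (c, i', j')"
      proof (cases b)
        case None then show ?thesis using b x by simp
      next
        case (Some t')
        then obtain c' k' l' where bs: "b = Some (c',k',l')" by (cases t') auto
        have c': "c' \<in> carrier G" and k': "k' < m" and l': "l' < n" using b bs Sc by auto
        obtain p' where p': "P j k' = Some p'"
          using b bs x by (cases "P j k'") auto
        have kk: "k' = i'" using uniq_row[OF sl j i' p k'] p' by auto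
        then have pp: "p' = p" using p p' by simp
        obtain q' where q': "P l' i = Some q'"
          using b bs x p' by (cases "P l' i") auto
        have ll: "l' = j'" using colU[OF sr i l' j' q' q] .
        then have qq: "q' = q" using q q' by simp
        have "a \<otimes> p \<otimes> c' \<otimes> q \<otimes> a = a" using b bs x p' q' pp qq by simp
        then have "c' \<otimes> q = inv (a \<otimes> p)" using galg2[OF a pc c' qc] by simp
        then have "c' \<otimes> q = c \<otimes> q" using cq by simp
        then have "c' = c" using right_cancel[OF qc c' cc] by simp
        then show ?thesis using bs kk ll by simp
      qed
    qed
  qed
qed

end



context rees_setting begin

lemma part2:
  assumes sl: "semiunitary (rees_carrier G m n) (pi_l G P m k \<sigma>)"
    and sr: "semiunitary (rees_carrier G m n) (pi_r G P n k \<sigma>)"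
    and inv: "involution_on (rees_carrier G m n) (rees_mult G P) st"
    and stl: "star_rep (rees_carrier G m n) st (pi_l G P m k \<sigma>)"
  shows "\<forall>s\<in>rees_carrier G m n. rees_mult G P (rees_mult G P s (st s)) s = s
                      \<and> rees_mult G P (rees_mult G P (st s) s) (st s) = st s"
proof
  interpret group G by (rule grp)
  have NS: "None \<in> rees_carrier G m n" by (simp add: rees_carrier_def)
  have stS: "st x \<in> rees_carrier G m n" if "x \<in> rees_carrier G m n" for x
    using inv that unfolding involution_on_def bij_betw_def by auto
  have stst: "st (st x) = x" if "x \<in> rees_carrier G m n" for x
    using inv that unfolding involution_on_def by auto
  have sthom: "st (rees_mult G P x y) = rees_mult G P (st y) (st x)"
    if "x \<in> rees_carrier G m n" "y \<in> rees_carrier G m n" for x y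
    using inv that unfolding involution_on_def by auto
  define z where "z = st None"
  have zS: "z \<in> rees_carrier G m n" unfolding z_def using stS[OF NS] .
  have "st (rees_mult G P z None) = rees_mult G P (st None) (st z)" using sthom[OF zS NS] .
  also have "st z = None" unfolding z_def using stst[OF NS] .
  finally have stN: "st None = None" unfolding z_def by (cases "st None") auto
  fix s assume sS: "s \<in> rees_carrier G m n"
  show "rees_mult G P (rees_mult G P s (st s)) s = s \<and> rees_mult G P (rees_mult G P (st s) s) (st s) = st s"
  proof (cases s)
    case None then show ?thesis using stN by simp
  next
    case (Some t)
    then obtain a i j where s: "s = Some (a,i,j)" by (cases t) auto
    have a: "a \<in> carrier G" and i: "i < m" and j: "j < n" using sS s Sc by auto
    have tS: "st s \<in> rees_carrier G m n" using stS[OF sS] .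
    have "st s \<noteq> None"
    proof
      assume "st s = None"
      then have "s = st None" using stst[OF sS] by simp
      then show False using stN s by simp
    qed
    then obtain c i2 j2 where t: "st s = Some (c,i2,j2)" by (cases "st s") auto
    have c: "c \<in> carrier G" and i2: "i2 < m" and j2: "j2 < n" using tS t Sc by auto
    obtain i' p where i': "i' < m" and p: "P j i' = Some p" using reg j unfolding regular_sandwich_def by blast
    obtain j' q where j': "j' < n" and q: "P j' i = Some q" using reg i unfolding regular_sandwich_def by blast
    obtain i3 p3 where i3: "i3 < m" and p3: "P j2 i3 = Some p3" using reg j2 unfolding regular_sandwich_def by blast
    have pc: "p \<in> carrier G" and qc: "q \<in> carrier G" and p3c: "p3 \<in> carrier G"
      using Pc i j i' j' p q i3 j2 p3 by auto
    define X where "X = \<sigma> (a \<otimes> p)"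
    define Y where "Y = \<sigma> (inv (a \<otimes> p))"
    define Z where "Z = \<sigma> (c \<otimes> p3)"
    have ap: "a \<otimes> p \<in> carrier G" using a pc by simp
    have Xc: "X \<in> carrier_mat k k" and Yc: "Y \<in> carrier_mat k k" and Zc: "Z \<in> carrier_mat k k"
      unfolding X_def Y_def Z_def using ap c p3c by auto
    have aXc: "adjm X \<in> carrier_mat k k" using Xc by simp
    have XY: "X * Y = 1\<^sub>m k" and YX: "Y * X = 1\<^sub>m k" unfolding X_def Y_def using sig_inv_r[OF ap] sig_inv_l[OF ap] by auto
    have piS: "pi_l G P m k \<sigma> s = blk (m*k) k i i' X"
      unfolding s X_def by (rule piL_blk[OF a i j i' p uniq_row[OF sl j i' p]])
    have piT: "pi_l G P m k \<sigma> (st s) = blk (m*k) k i2 i3 Z"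
      unfolding t Z_def by (rule piL_blk[OF c i2 j2 i3 p3 uniq_row[OF sl j2 i3 p3]])
    have "blk (m*k) k i i' X * adjm (blk (m*k) k i i' X) * blk (m*k) k i i' X = blk (m*k) k i i' X"
      using sl sS piS unfolding semiunitary_def by auto
    then have "blk (m*k) k i i' (X * adjm X * X) = blk (m*k) k i i' X"
      unfolding blk_adj[OF Xc kpos]
      using blk_mult[OF kpos i i' i Xc aXc] blk_mult[OF kpos i i i' _ Xc, of "X * adjm X"] Xc
      by simp
    moreover have "X * adjm X * X \<in> carrier_mat k k" using mult_carrier_mat[OF mult_carrier_mat[OF Xc aXc] Xc] .
    ultimately have XXX: "X * adjm X * X = X" using blk_inj[OF kpos i i' _ Xc] by blast
    have XaX: "X * adjm X = 1\<^sub>m k"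
    proof -
      have "X * adjm X = X * adjm X * (X * Y)" using XY Xc by simp
      also have "\<dots> = X * adjm X * X * Y" using assoc_mult_mat[of "X * adjm X" k k X k Y k] Xc Yc by simp
      also have "\<dots> = 1\<^sub>m k" using XXX XY by simp
      finally show ?thesis .
    qed
    have aXY: "adjm X = Y"
    proof -
      have "adjm X = (Y * X) * adjm X" using YX Xc by simp
      also have "\<dots> = Y * (X * adjm X)" using assoc_mult_mat[OF Yc Xc aXc] .
      also have "\<dots> = Y" using XaX Yc by simp
      finally show ?thesis .
    qed
    have "blk (m*k) k i2 i3 Z = blk (m*k) k i' i Y"
      using stl sS piS piT blk_adj[OF Xc kpos] aXY unfolding star_rep_def by auto
    moreover have cp3: "c \<otimes> p3 \<in> carrier G" using c p3c by simp
    moreover obtain v where v: "v < k" "Z $$ (0,v) \<noteq> 0"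
      using inv_row_nz[OF kpos Zc sig_carrier[OF inv_closed[OF cp3]]] sig_inv_r[OF cp3] unfolding Z_def by blast
    ultimately have eqs: "i2 = i' \<and> i3 = i" and ZY: "Z = Y"
      using blk_pos[OF kpos i2 i3 i' i _ v(1) v(2)] kpos blk_inj[OF kpos i' i Zc Yc] by auto
    have "c \<otimes> p3 = inv (a \<otimes> p)" using faithful[OF cp3 inv_closed[OF ap]] ZY unfolding Z_def Y_def by simp
    moreover have "j2 = j'" using colU[OF sr i j2 j'] p3 q eqs by auto
    moreover then have "p3 = q" using p3 q eqs by simp
    ultimately have cq: "c \<otimes> q = inv (a \<otimes> p)" by simp
    note g1 = galg1[OF a pc c qc cq]
    show ?thesis using s t eqs \<open>j2 = j'\<close> p q g1 by simp
  qed
qed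

end



theorem mainTheorem7:
  fixes G :: "('g, 'b) monoid_scheme"
    and m n :: nat
    and P :: "nat \<Rightarrow> nat \<Rightarrow> 'g option"
    and ss :: "(nat \<times> ('g \<Rightarrow> complex mat)) list"
  assumes "group G" and "finite (carrier G)"
    and "sandwich_matrix G m n P"
    and "regular_sandwich m n P"
    and "complete_irreps G ss"
  defines "S \<equiv> rees_carrier G m n"
    and "k \<equiv> dsum_dim ss"
    and "\<sigma> \<equiv> dsum_rep ss"
  shows "(semiunitary S (pi_l G P m k \<sigma>) \<and> semiunitary S (pi_r G P n k \<sigma>)
            \<longrightarrow> inverse_semigroup S (rees_mult G P))
       \<and> (\<forall>st. involution_on S (rees_mult G P) st
              \<and> semiunitary S (pi_l G P m k \<sigma>) \<and> semiunitary S (pi_r G P n k \<sigma>)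
              \<and> star_rep S st (pi_l G P m k \<sigma>) \<and> star_rep S st (pi_r G P n k \<sigma>)
            \<longrightarrow> inverse_semigroup S (rees_mult G P)
              \<and> (\<forall>s\<in>S. rees_mult G P (rees_mult G P s (st s)) s = s
                      \<and> rees_mult G P (rees_mult G P (st s) s) (st s) = st s))"
proof -
  have grp: "group G" by fact
  have C: "complete_irreps G ss" by fact
  have rep: "mat_rep G k \<sigma>" unfolding k_def \<sigma>_def
    by (rule dsum_mat_rep) (use C in \<open>auto simp: complete_irreps_def irreducible_rep_def\<close>)
  have kpos: "k > 0" unfolding k_def by (rule sigma_pos[OF grp C])
  have faithful: "x = y" if x: "x \<in> carrier G" and y: "y \<in> carrier G" and e: "\<sigma> x = \<sigma> y" for x y
  proof -
    interpret group G by (rule grp)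
    have iy: "inv\<^bsub>G\<^esub> y \<in> carrier G" using y by simp
    have "\<sigma> (x \<otimes>\<^bsub>G\<^esub> inv\<^bsub>G\<^esub> y) = \<sigma> x * \<sigma> (inv\<^bsub>G\<^esub> y)" using rep x iy unfolding mat_rep_def by auto
    also have "\<dots> = \<sigma> y * \<sigma> (inv\<^bsub>G\<^esub> y)" using e by simp
    also have "\<dots> = \<sigma> (y \<otimes>\<^bsub>G\<^esub> inv\<^bsub>G\<^esub> y)"
    proof -
      have mult: "\<forall>g\<in>carrier G. \<forall>h\<in>carrier G. \<sigma> (g \<otimes>\<^bsub>G\<^esub> h) = \<sigma> g * \<sigma> h"
        using rep unfolding mat_rep_def by blast
      show ?thesis using mult[rule_format, OF y iy, symmetric] .
    qed
    also have "\<dots> = \<sigma> \<one>\<^bsub>G\<^esub>" using r_inv[OF y] by simp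
    also have "\<dots> = 1\<^sub>m k" using rep unfolding mat_rep_def by auto
    finally have "x \<otimes>\<^bsub>G\<^esub> inv\<^bsub>G\<^esub> y = \<one>\<^bsub>G\<^esub>"
      using sigma_faithful_one[OF grp assms(2) C, of "x \<otimes>\<^bsub>G\<^esub> inv\<^bsub>G\<^esub> y"] x iy unfolding k_def \<sigma>_def by simp
    then show ?thesis using x y iy by (metis inv_equality inv_inv)
  qed
  interpret R: rees_setting G m n k P \<sigma>
    by (intro rees_setting.intro) (use grp assms(3,4) rep kpos faithful in auto)
  show ?thesis unfolding S_def using R.part1 R.part2 by blast
qed


end
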